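(* Let $V^+, V^-$, the $S^1$-action with weights $\kappa_i$, and the norms $|z^\pm|^2$ be as in the context, and let $\Phi(z^+,z^-) = |z^+|^2-|z^-|^2$ on $V^+\times V^-$. Let $\delta>0$, let $\rho:\mathbb{R}\to\mathbb{R}$ be smooth with $\rho(t)=1$ for $t<\delta$, $\rho(t)=0$ for $t>2\delta$, $\rho'\le 0$, and let $C=\sup|\rho'|$. Let $\epsilon\neq 0$ with $|\epsilon|<C^{-1}$ and $|\epsilon|<\delta$. Define $$\tilde\Phi(z^+,z^-) = |z^+|^2-|z^-|^2+\epsilon\,\rho(|z^+|^2+|z^-|^2)$$ and $\psi: V^+\times V^-\to\Phi^{-1}(0)$ by $\psi(z^+,z^-) = \big((|z^-|^2/|z^+|^2)^{1/4}z^+,\ (|z^+|^2/|z^-|^2)^{1/4}z^-\big)$ if $z^+\neq0\neq z^-$, and $\psi(z^+,z^-)=(0,0)$ if $z^+=0$ or $z^-=0$. Then: $\tilde\Phi$ is $G\times S^1$-invariant; its only critical point is $(0,0)$, which is nondegenerate; $0$ is a regular value of $\tilde\Phi$; $\tilde\Phi^{-1}(0)$ coincides with $\Phi^{-1}(0)$ on $\{|z^+|^2+|z^-|^2>2\delta\}$ and with $\Phi^{-1}(-\epsilon)$ on $\{|z^+|^2+|z^-|^2<\delta\}$; and $\psi$ restricts to a $G\times S^1$-equivariant diffeomorphism from $\tilde\Phi^{-1}(0)\setminus\psi^{-1}(0,0)$ onto $\Phi^{-1}(0)\setminus\{(0,0)\}$.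
   Context: $V^+=\bigoplus_{i\le s}\mathbb{C}^{n_i}$, $V^-=\bigoplus_{i>s}\mathbb{C}^{n_i}$, with $S^1$ acting on $\mathbb{C}^{n_i}$ by $\lambda\mapsto\lambda^{\kappa_i}$, where $\kappa_1,\dots,\kappa_s>0$ and $\kappa_{s+1},\dots,\kappa_k<0$ are distinct integers; $G=\prod U(n_i)$ acts block-diagonally. $|z^+|^2=\sum_{i\le s}\kappa_i|\vec z_i|^2$ and $|z^-|^2=\sum_{i>s}|\kappa_i||\vec z_i|^2$. *)

theory Defs
  imports "HOL-Analysis.Analysis"
begin

text \<open>C-infinity on an open set U: there is a family D of iterated directional
derivatives, D [] = f, and for every list of directions vs the map D vs is
(Frechet) differentiable at every point of U with derivative v \<mapsto> D (v # vs) x.\<close>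
definition smooth_on :: "'a::euclidean_space set \<Rightarrow> ('a \<Rightarrow> 'b::euclidean_space) \<Rightarrow> bool" where
  "smooth_on U f \<longleftrightarrow> open U \<and>
     (\<exists>D :: 'a list \<Rightarrow> 'a \<Rightarrow> 'b. D [] = f \<and>
        (\<forall>vs. \<forall>x\<in>U. (D vs has_derivative (\<lambda>v. D (v # vs) x)) (at x)))"

definition smooth_map_on :: "'a::euclidean_space set \<Rightarrow> ('a \<Rightarrow> 'b::euclidean_space) \<Rightarrow> bool" where
  "smooth_map_on S f \<longleftrightarrow>
     (\<forall>x\<in>S. \<exists>U g. x \<in> U \<and> smooth_on U g \<and> (\<forall>y\<in>S \<inter> U. g y = f y))"

definition diffeomorphism_onto ::
  "('a::euclidean_space \<Rightarrow> 'b::euclidean_space) \<Rightarrow> 'a set \<Rightarrow> 'b set \<Rightarrow> bool" where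
  "diffeomorphism_onto f S T \<longleftrightarrow>
     inj_on f S \<and> f ` S = T \<and> smooth_map_on S f \<and> smooth_map_on T (inv_into S f)"

definition critical_point :: "('a::euclidean_space \<Rightarrow> real) \<Rightarrow> 'a \<Rightarrow> bool" where
  "critical_point f x \<longleftrightarrow> \<not> (\<exists>D. (f has_derivative D) (at x) \<and> surj D)"

text \<open>Nondegenerate: the Hessian (derivative at x of the gradient) is invertible.\<close>
definition nondegenerate_critical_point :: "('a::euclidean_space \<Rightarrow> real) \<Rightarrow> 'a \<Rightarrow> bool" where
  "nondegenerate_critical_point f x \<longleftrightarrow> critical_point f x \<and>
     (\<exists>U grad H. open U \<and> x \<in> U \<and>
        (\<forall>y\<in>U. (f has_derivative (\<lambda>v. grad y \<bullet> v)) (at y)) \<and>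
        (grad has_derivative H) (at x) \<and> inj H)"

definition regular_value :: "('a::euclidean_space \<Rightarrow> real) \<Rightarrow> real \<Rightarrow> bool" where
  "regular_value f c \<longleftrightarrow> (\<forall>x. f x = c \<longrightarrow> \<not> critical_point f x)"

text \<open>Coordinates of complex^'n are grouped into blocks by blk :: 'n \<Rightarrow> nat with
values in 1..k; block i is C^(n_i), n_i = card {j. blk j = i}.  Blocks i \<le> s form
V+, blocks i > s form V-.  kappa i is the weight of block i.\<close>

definition zplus :: "('n::finite \<Rightarrow> nat) \<Rightarrow> nat \<Rightarrow> complex^'n \<Rightarrow> complex^'n" where
  "zplus blk s z = (\<chi> j. if blk j \<le> s then z $ j else 0)"

definition zminus :: "('n::finite \<Rightarrow> nat) \<Rightarrow> nat \<Rightarrow> complex^'n \<Rightarrow> complex^'n" where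
  "zminus blk s z = (\<chi> j. if blk j \<le> s then 0 else z $ j)"

definition sqn_plus :: "(nat \<Rightarrow> int) \<Rightarrow> ('n::finite \<Rightarrow> nat) \<Rightarrow> nat \<Rightarrow> complex^'n \<Rightarrow> real" where
  "sqn_plus \<kappa> blk s z = (\<Sum>j\<in>{j. blk j \<le> s}. real_of_int (\<kappa> (blk j)) * (cmod (z $ j))\<^sup>2)"

definition sqn_minus :: "(nat \<Rightarrow> int) \<Rightarrow> ('n::finite \<Rightarrow> nat) \<Rightarrow> nat \<Rightarrow> complex^'n \<Rightarrow> real" where
  "sqn_minus \<kappa> blk s z = (\<Sum>j\<in>{j. s < blk j}. real_of_int \<bar>\<kappa> (blk j)\<bar> * (cmod (z $ j))\<^sup>2)"

definition Phi :: "(nat \<Rightarrow> int) \<Rightarrow> ('n::finite \<Rightarrow> nat) \<Rightarrow> nat \<Rightarrow> complex^'n \<Rightarrow> real" where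
  "Phi \<kappa> blk s z = sqn_plus \<kappa> blk s z - sqn_minus \<kappa> blk s z"

definition Phi_tilde :: "(nat \<Rightarrow> int) \<Rightarrow> ('n::finite \<Rightarrow> nat) \<Rightarrow> nat \<Rightarrow> real \<Rightarrow> (real \<Rightarrow> real)
    \<Rightarrow> complex^'n \<Rightarrow> real" where
  "Phi_tilde \<kappa> blk s \<epsilon> \<rho> z =
     sqn_plus \<kappa> blk s z - sqn_minus \<kappa> blk s z + \<epsilon> * \<rho> (sqn_plus \<kappa> blk s z + sqn_minus \<kappa> blk s z)"

definition psi :: "(nat \<Rightarrow> int) \<Rightarrow> ('n::finite \<Rightarrow> nat) \<Rightarrow> nat \<Rightarrow> complex^'n \<Rightarrow> complex^'n" where
  "psi \<kappa> blk s z =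
     (if zplus blk s z \<noteq> 0 \<and> zminus blk s z \<noteq> 0 then
        ((sqn_minus \<kappa> blk s z / sqn_plus \<kappa> blk s z) powr (1/4)) *\<^sub>R zplus blk s z
      + ((sqn_plus \<kappa> blk s z / sqn_minus \<kappa> blk s z) powr (1/4)) *\<^sub>R zminus blk s z
      else 0)"

definition cadjoint :: "complex^'n^'n \<Rightarrow> complex^'n^'n" where
  "cadjoint A = (\<chi> i j. cnj (A $ j $ i))"

text \<open>G = prod U(n_i): block-diagonal unitary matrices.\<close>
definition G_set :: "('n::finite \<Rightarrow> nat) \<Rightarrow> (complex^'n^'n) set" where
  "G_set blk = {A. cadjoint A ** A = mat 1 \<and> (\<forall>i j. blk i \<noteq> blk j \<longrightarrow> A $ i $ j = 0)}"

definition s1_act :: "(nat \<Rightarrow> int) \<Rightarrow> ('n::finite \<Rightarrow> nat) \<Rightarrow> complex \<Rightarrow> complex^'n \<Rightarrow> complex^'n" where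
  "s1_act \<kappa> blk lam z = (\<chi> j. lam powi \<kappa> (blk j) * z $ j)"

definition GS1_act :: "(nat \<Rightarrow> int) \<Rightarrow> ('n::finite \<Rightarrow> nat) \<Rightarrow> complex^'n^'n \<Rightarrow> complex
    \<Rightarrow> complex^'n \<Rightarrow> complex^'n" where
  "GS1_act \<kappa> blk A lam z = A *v s1_act \<kappa> blk lam z"

end

theory Submission
  imports Defs
begin


lemma smooth_on_coinduct:
  fixes Q :: "('a::euclidean_space \<Rightarrow> 'b::euclidean_space) \<Rightarrow> bool"
  assumes U: "open U" and Qf: "Q f"
    and step: "\<And>g. Q g \<Longrightarrow> \<exists>g'. (\<forall>x\<in>U. (g has_derivative (\<lambda>v. g' v x)) (at x)) \<and> (\<forall>v. Q (g' v))"
  shows "smooth_on U f"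
proof -
  define der where "der g = (SOME g'. (\<forall>x\<in>U. (g has_derivative (\<lambda>v. g' v x)) (at x)) \<and> (\<forall>v. Q (g' v)))" for g
  have der: "(\<forall>x\<in>U. (g has_derivative (\<lambda>v. der g v x)) (at x)) \<and> (\<forall>v. Q (der g v))" if "Q g" for g
    unfolding der_def by (rule someI_ex[OF step[OF that]])
  define D where "D vs = foldr (\<lambda>v h. der h v) vs f" for vs
  have DQ: "Q (D vs)" for vs
    by (induction vs) (auto simp: D_def Qf dest: der)
  have "D (v # vs) = der (D vs) v" for v vs by (simp add: D_def)
  then show ?thesis unfolding smooth_on_def using U DQ der
    by (intro conjI exI[of _ D]) (auto simp: D_def)
qed

lemma smooth_on_unfold:
  assumes "smooth_on U f"
  shows "\<exists>f'. (\<forall>x\<in>U. (f has_derivative (\<lambda>v. f' v x)) (at x)) \<and> (\<forall>v. smooth_on U (f' v))"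
proof -
  from assms obtain D where U: "open U" and D0: "D [] = f"
    and D: "\<And>vs x. x \<in> U \<Longrightarrow> (D vs has_derivative (\<lambda>v. D (v # vs) x)) (at x)"
    unfolding smooth_on_def by blast
  have "smooth_on U (D [v])" for v
    unfolding smooth_on_def
  proof (intro conjI U exI[of _ "\<lambda>ws. D (ws @ [v])"] allI ballI)
    fix ws x assume "x \<in> U"
    then show "(D (ws @ [v]) has_derivative (\<lambda>w. D ((w # ws) @ [v]) x)) (at x)"
      using D by simp
  qed simp
  then show ?thesis using D[of _ "[]"] D0 by (intro exI[of _ "\<lambda>v. D [v]"]) auto
qed

lemma smooth_on_open: "smooth_on U f \<Longrightarrow> open U"
  by (simp add: smooth_on_def)

lemma smooth_on_by_deriv:
  assumes "open U" "\<forall>x\<in>U. (f has_derivative (\<lambda>v. f' v x)) (at x)" "\<forall>v. smooth_on U (f' v)"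
  shows "smooth_on U f"
  apply (rule smooth_on_coinduct[where Q="\<lambda>h. h = f \<or> smooth_on U h", OF assms(1)])
  using assms smooth_on_unfold by blast+

lemma smooth_on_subset:
  assumes "smooth_on U f" "open V" "V \<subseteq> U"
  shows "smooth_on V f"
  using assms unfolding smooth_on_def by blast

lemma smooth_on_cong:
  assumes "smooth_on U f" "\<And>x. x \<in> U \<Longrightarrow> f x = g x"
  shows "smooth_on U g"
proof -
  have U: "open U" using assms smooth_on_open by blast
  obtain f' where f': "\<forall>x\<in>U. (f has_derivative (\<lambda>v. f' v x)) (at x)" "\<forall>v. smooth_on U (f' v)"
    using smooth_on_unfold[OF assms(1)] by blast
  show ?thesis
  proof (rule smooth_on_by_deriv[OF U _ f'(2)], intro ballI)
    fix x assume "x \<in> U"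
    then show "(g has_derivative (\<lambda>v. f' v x)) (at x)"
      using has_derivative_transform_within_open[OF _ U, of f _ x UNIV g] f' assms(2) by blast
  qed
qed

lemma smooth_on_imp_continuous_on:
  assumes "smooth_on U f" shows "continuous_on U f"
proof -
  obtain f' where f': "\<forall>x\<in>U. (f has_derivative (\<lambda>v. f' v x)) (at x)"
    using smooth_on_unfold[OF assms] by blast
  then show ?thesis
    by (meson continuous_at_imp_continuous_on has_derivative_continuous)
qed

lemma smooth_on_const: "open U \<Longrightarrow> smooth_on U (\<lambda>x. c)"
  apply (rule smooth_on_coinduct[where Q="\<lambda>h. \<exists>c. h = (\<lambda>x. c)"])
  apply auto
  apply (rule exI[of _ "\<lambda>v x. 0"])
  apply auto
  done

lemma smooth_on_linear:
  assumes "open U" "bounded_linear L"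
  shows "smooth_on U L"
proof -
  have "\<forall>x\<in>U. (L has_derivative (\<lambda>v. L v)) (at x)"
    using assms(2) bounded_linear_imp_has_derivative by blast
  moreover have "\<forall>v. smooth_on U (\<lambda>x. L v)" using smooth_on_const[OF assms(1)] by blast
  ultimately show ?thesis using smooth_on_by_deriv[OF assms(1), of L "\<lambda>v x. L v"] by simp
qed

lemma smooth_on_add_step:
  assumes "\<exists>f g. smooth_on U f \<and> smooth_on U g \<and> h = (\<lambda>x. f x + g x)"
  shows "\<exists>h'. (\<forall>x\<in>U. (h has_derivative (\<lambda>v. h' v x)) (at x)) \<and>
              (\<forall>v. \<exists>f g. smooth_on U f \<and> smooth_on U g \<and> h' v = (\<lambda>x. f x + g x))"
proof -
  obtain f g where fg: "smooth_on U f" "smooth_on U g" "h = (\<lambda>x. f x + g x)" using assms by blast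
  obtain f' where f': "\<forall>x\<in>U. (f has_derivative (\<lambda>v. f' v x)) (at x)" "\<forall>v. smooth_on U (f' v)"
    using smooth_on_unfold[OF fg(1)] by blast
  obtain g' where g': "\<forall>x\<in>U. (g has_derivative (\<lambda>v. g' v x)) (at x)" "\<forall>v. smooth_on U (g' v)"
    using smooth_on_unfold[OF fg(2)] by blast
  show ?thesis
    apply (rule exI[of _ "\<lambda>v x. f' v x + g' v x"], rule conjI)
    using f' g' fg(3) apply (auto intro: has_derivative_add)[1]
    using f' g' by blast
qed

lemma smooth_on_add:
  assumes "smooth_on U f" "smooth_on U g"
  shows "smooth_on U (\<lambda>x. f x + g x)"
  apply (rule smooth_on_coinduct[where Q="\<lambda>h. \<exists>f g. smooth_on U f \<and> smooth_on U g \<and> h = (\<lambda>x. f x + g x)"])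
  using assms smooth_on_open smooth_on_add_step by blast+

lemma smooth_on_sum:
  assumes "open U" "\<And>i. i \<in> A \<Longrightarrow> smooth_on U (f i)"
  shows "smooth_on U (\<lambda>x. \<Sum>i\<in>A. f i x)"
  using assms(2)
proof (induction A rule: infinite_finite_induct)
  case (infinite A) then show ?case using smooth_on_const[OF assms(1)] by simp
next
  case empty then show ?case using smooth_on_const[OF assms(1)] by simp
next
  case (insert a A) then show ?case by (simp add: smooth_on_add)
qed

inductive prod_cl :: "'a::euclidean_space set \<Rightarrow> ('a \<Rightarrow> 'b::euclidean_space) \<Rightarrow> bool" for U where
  base: "smooth_on U (f::'a \<Rightarrow> real) \<Longrightarrow> smooth_on U g \<Longrightarrow> prod_cl U (\<lambda>x. f x *\<^sub>R g x)"
| plus: "prod_cl U a \<Longrightarrow> prod_cl U b \<Longrightarrow> prod_cl U (\<lambda>x. a x + b x)"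

lemma prod_cl_step:
  assumes "prod_cl U h"
  shows "\<exists>h'. (\<forall>x\<in>U. (h has_derivative (\<lambda>v. h' v x)) (at x)) \<and> (\<forall>v. prod_cl U (h' v))"
  using assms
proof induction
  case (base f g)
  obtain f' where f': "\<forall>x\<in>U. (f has_derivative (\<lambda>v. f' v x)) (at x)" "\<forall>v. smooth_on U (f' v)"
    using smooth_on_unfold[OF base(1)] by blast
  obtain g' where g': "\<forall>x\<in>U. (g has_derivative (\<lambda>v. g' v x)) (at x)" "\<forall>v. smooth_on U (g' v)"
    using smooth_on_unfold[OF base(2)] by blast
  show ?case
    apply (rule exI[of _ "\<lambda>v x. f x *\<^sub>R g' v x + f' v x *\<^sub>R g x"])
    using f' g' base by (auto intro!: has_derivative_scaleR prod_cl.intros)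
next
  case (plus a b)
  then obtain a' b' where a': "\<forall>x\<in>U. (a has_derivative (\<lambda>v. a' v x)) (at x)" "\<forall>v. prod_cl U (a' v)"
    and b': "\<forall>x\<in>U. (b has_derivative (\<lambda>v. b' v x)) (at x)" "\<forall>v. prod_cl U (b' v)" by blast
  show ?case
    apply (rule exI[of _ "\<lambda>v x. a' v x + b' v x"])
    using a' b' by (auto intro!: has_derivative_add prod_cl.intros)
qed

lemma smooth_on_scaleR:
  fixes f :: "'a::euclidean_space \<Rightarrow> real" and g :: "'a \<Rightarrow> 'b::euclidean_space"
  assumes "smooth_on U f" "smooth_on U g"
  shows "smooth_on U (\<lambda>x. f x *\<^sub>R g x)"
  apply (rule smooth_on_coinduct[where Q="prod_cl U"])
  using assms smooth_on_open prod_cl.base prod_cl_step by blast+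

lemma smooth_on_mult:
  fixes f g :: "'a::euclidean_space \<Rightarrow> real"
  assumes "smooth_on U f" "smooth_on U g"
  shows "smooth_on U (\<lambda>x. f x * g x)"
  using smooth_on_scaleR[OF assms] by simp

lemma smooth_on_cmult:
  fixes g :: "'a::euclidean_space \<Rightarrow> 'b::euclidean_space"
  assumes "smooth_on U g"
  shows "smooth_on U (\<lambda>x. c *\<^sub>R g x)"
  using smooth_on_scaleR[OF smooth_on_const[OF smooth_on_open[OF assms]] assms] .

lemma smooth_on_diff:
  fixes f g :: "'a::euclidean_space \<Rightarrow> 'b::euclidean_space"
  assumes "smooth_on U f" "smooth_on U g"
  shows "smooth_on U (\<lambda>x. f x - g x)"
  using smooth_on_add[OF assms(1) smooth_on_cmult[OF assms(2), of "-1"]] by simp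

lemma deriv_1d_scale:
  fixes b :: "real \<Rightarrow> 'b::real_normed_vector"
  assumes "(b has_derivative B) F"
  shows "B v = v *\<^sub>R B 1"
proof -
  have "linear B" using assms has_derivative_linear by blast
  then show ?thesis using linear_scale[of B v 1] by simp
qed

inductive comp_cl :: "'a::euclidean_space set \<Rightarrow> real set \<Rightarrow> ('a \<Rightarrow> real) \<Rightarrow> ('a \<Rightarrow> 'b::euclidean_space) \<Rightarrow> bool"
  for U V \<phi> where
  base: "smooth_on U (a::'a \<Rightarrow> real) \<Longrightarrow> smooth_on V b \<Longrightarrow> comp_cl U V \<phi> (\<lambda>x. a x *\<^sub>R b (\<phi> x))"
| plus: "comp_cl U V \<phi> f \<Longrightarrow> comp_cl U V \<phi> g \<Longrightarrow> comp_cl U V \<phi> (\<lambda>x. f x + g x)"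

lemma comp_cl_step:
  assumes "comp_cl U V \<phi> h" "smooth_on U \<phi>" "\<phi> ` U \<subseteq> V"
  shows "\<exists>h'. (\<forall>x\<in>U. (h has_derivative (\<lambda>v. h' v x)) (at x)) \<and> (\<forall>v. comp_cl U V \<phi> (h' v))"
  using assms(1)
proof induction
  case (base a b)
  have V: "open V" using base smooth_on_open by blast
  obtain a' where a': "\<forall>x\<in>U. (a has_derivative (\<lambda>v. a' v x)) (at x)" "\<forall>v. smooth_on U (a' v)"
    using smooth_on_unfold[OF base(1)] by blast
  obtain b' where b': "\<forall>y\<in>V. (b has_derivative (\<lambda>v. b' v y)) (at y)" "\<forall>v. smooth_on V (b' v)"
    using smooth_on_unfold[OF base(2)] by blast
  obtain p' where p': "\<forall>x\<in>U. (\<phi> has_derivative (\<lambda>v. p' v x)) (at x)" "\<forall>v. smooth_on U (p' v)"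
    using smooth_on_unfold[OF assms(2)] by blast
  have bsc: "b' w y = w *\<^sub>R b' 1 y" if "y \<in> V" for w y
    using deriv_1d_scale[of b "\<lambda>v. b' v y"] b'(1) that by blast
  show ?case
  proof (rule exI[of _ "\<lambda>v x. a' v x *\<^sub>R b (\<phi> x) + (a x * p' v x) *\<^sub>R b' 1 (\<phi> x)"], intro conjI ballI allI)
    fix x assume x: "x \<in> U"
    have px: "\<phi> x \<in> V" using x assms(3) by blast
    have d1: "(\<phi> has_derivative (\<lambda>v. p' v x)) (at x)" using p'(1) x by blast
    have d2: "(b has_derivative (\<lambda>v. b' v (\<phi> x))) (at (\<phi> x))" using b'(1) px by blast
    have "((\<lambda>x. b (\<phi> x)) has_derivative (\<lambda>v. b' (p' v x) (\<phi> x))) (at x)"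
      using has_derivative_compose[OF d1 d2] unfolding o_def .
    moreover have "(\<lambda>v. b' (p' v x) (\<phi> x)) = (\<lambda>v. p' v x *\<^sub>R b' 1 (\<phi> x))"
      by (rule ext) (rule bsc[OF px])
    ultimately have d3: "((\<lambda>x. b (\<phi> x)) has_derivative (\<lambda>v. p' v x *\<^sub>R b' 1 (\<phi> x))) (at x)"
      by simp
    have d4: "(a has_derivative (\<lambda>v. a' v x)) (at x)" using a'(1) x by blast
    have e: "(\<lambda>v. a x *\<^sub>R (p' v x *\<^sub>R b' 1 (\<phi> x)) + a' v x *\<^sub>R b (\<phi> x))
       = (\<lambda>v. a' v x *\<^sub>R b (\<phi> x) + (a x * p' v x) *\<^sub>R b' 1 (\<phi> x))"
      by (simp add: algebra_simps)
    show "((\<lambda>x. a x *\<^sub>R b (\<phi> x)) has_derivative (\<lambda>v. a' v x *\<^sub>R b (\<phi> x) + (a x * p' v x) *\<^sub>R b' 1 (\<phi> x))) (at x)"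
      using has_derivative_scaleR[OF d4 d3] unfolding e .
  next
    fix v
    show "comp_cl U V \<phi> (\<lambda>x. a' v x *\<^sub>R b (\<phi> x) + (a x * p' v x) *\<^sub>R b' 1 (\<phi> x))"
    proof (rule comp_cl.plus)
      show "comp_cl U V \<phi> (\<lambda>x. a' v x *\<^sub>R b (\<phi> x))"
        using a'(2) base(2) by (simp add: comp_cl.base)
      have sm: "smooth_on U (\<lambda>x. a x * p' v x)" using base(1) p'(2) by (simp add: smooth_on_mult)
      show "comp_cl U V \<phi> (\<lambda>x. (a x * p' v x) *\<^sub>R b' 1 (\<phi> x))"
        using comp_cl.base[OF sm, of V "b' 1" \<phi>] b'(2) by simp
    qed
  qed
next
  case (plus f g)
  then obtain f' g' where f': "\<forall>x\<in>U. (f has_derivative (\<lambda>v. f' v x)) (at x)" "\<forall>v. comp_cl U V \<phi> (f' v)"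
    and g': "\<forall>x\<in>U. (g has_derivative (\<lambda>v. g' v x)) (at x)" "\<forall>v. comp_cl U V \<phi> (g' v)" by blast
  show ?case
    apply (rule exI[of _ "\<lambda>v x. f' v x + g' v x"])
    using f' g' by (auto intro!: has_derivative_add comp_cl.intros)
qed

lemma smooth_on_compose:
  fixes \<phi> :: "'a::euclidean_space \<Rightarrow> real" and b :: "real \<Rightarrow> 'b::euclidean_space"
  assumes "smooth_on U \<phi>" "smooth_on V b" "\<phi> ` U \<subseteq> V"
  shows "smooth_on U (\<lambda>x. b (\<phi> x))"
proof -
  have U: "open U" using assms smooth_on_open by blast
  have "comp_cl U V \<phi> (\<lambda>x. (\<lambda>x. 1) x *\<^sub>R b (\<phi> x))"
    by (rule comp_cl.base[OF smooth_on_const[OF U] assms(2)])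
  then have "comp_cl U V \<phi> (\<lambda>x. b (\<phi> x))" by simp
  then show ?thesis
    by (rule smooth_on_coinduct[where Q="comp_cl U V \<phi>", OF U]) (rule comp_cl_step[OF _ assms(1,3)])
qed



lemma has_real_derivative_alt:
  "(f has_real_derivative D) F \<longleftrightarrow> (f has_derivative (\<lambda>v. v * D)) F"
proof -
  have "(*) D = (\<lambda>v. v * D)" by (auto simp: fun_eq_iff)
  then show ?thesis by (simp add: has_field_derivative_def)
qed

lemma smooth_1d_intro:
  fixes b b1 :: "real \<Rightarrow> real"
  assumes "open V" "\<forall>x\<in>V. (b has_real_derivative b1 x) (at x)" "smooth_on V b1"
  shows "smooth_on V b"
proof (rule smooth_on_by_deriv[OF assms(1), of b "\<lambda>v x. v * b1 x"])
  show "\<forall>x\<in>V. (b has_derivative (\<lambda>v. v * b1 x)) (at x)"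
    using assms(2) by (simp add: has_real_derivative_alt)
  show "\<forall>v. smooth_on V (\<lambda>x. v * b1 x)"
    using smooth_on_mult[OF smooth_on_const[OF assms(1)] assms(3)] by blast
qed

lemma smooth_1d_elim:
  fixes b :: "real \<Rightarrow> real"
  assumes "smooth_on V b"
  shows "\<exists>b1. (\<forall>x\<in>V. (b has_real_derivative b1 x) (at x)) \<and> smooth_on V b1"
proof -
  obtain f' where f': "\<forall>x\<in>V. (b has_derivative (\<lambda>v. f' v x)) (at x)" "\<forall>v. smooth_on V (f' v)"
    using smooth_on_unfold[OF assms] by blast
  have "(b has_real_derivative f' 1 x) (at x)" if "x \<in> V" for x
  proof -
    have d: "(b has_derivative (\<lambda>v. f' v x)) (at x)" using f'(1) that by blast
    have "(\<lambda>v. f' v x) = (\<lambda>v. f' 1 x * v)"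
    proof (rule ext)
      fix v show "f' v x = f' 1 x * v" using deriv_1d_scale[OF d, of v] by (simp add: mult.commute)
    qed
    then show ?thesis using d by (simp add: has_field_derivative_def)
  qed
  then show ?thesis using f'(2) by blast
qed

lemma smooth_powr: "smooth_on {0<..} (\<lambda>x::real. c * x powr r)"
proof (rule smooth_on_coinduct[where Q="\<lambda>h. \<exists>c r. h = (\<lambda>x::real. c * x powr r)"])
  show "open {0::real<..}" by simp
  show "\<exists>ca ra. (\<lambda>x. c * x powr r) = (\<lambda>x. ca * x powr ra)" by blast
next
  fix g :: "real \<Rightarrow> real" assume "\<exists>c r. g = (\<lambda>x. c * x powr r)"
  then obtain c r where g: "g = (\<lambda>x. c * x powr r)" by blast
  have "(g has_derivative (\<lambda>v. (v * c * r) * x powr (r - 1))) (at x)" if "x \<in> {0<..}" for x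
  proof -
    have "(g has_real_derivative c * (r * x powr (r - 1))) (at x)"
      unfolding g using that by (auto intro!: derivative_eq_intros has_real_derivative_powr)
    then show ?thesis by (simp add: has_real_derivative_alt mult_ac)
  qed
  then show "\<exists>g'. (\<forall>x\<in>{0<..}. (g has_derivative (\<lambda>v. g' v x)) (at x)) \<and>
             (\<forall>v. \<exists>c r. g' v = (\<lambda>x. c * x powr r))"
    by (intro exI[of _ "\<lambda>v x. (v * c * r) * x powr (r - 1)"]) blast
qed

lemma smooth_powr_compose:
  fixes f :: "'a::euclidean_space \<Rightarrow> real"
  assumes "smooth_on U f" "\<And>x. x \<in> U \<Longrightarrow> f x > 0"
  shows "smooth_on U (\<lambda>x. f x powr r)"
  using smooth_on_compose[OF assms(1) smooth_powr[of 1 r]] assms(2) by auto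

lemma smooth_inverse_1d:
  fixes \<phi> \<phi>1 g :: "real \<Rightarrow> real"
  assumes I: "open I" and J: "open J"
    and der: "\<forall>t\<in>I. (\<phi> has_real_derivative \<phi>1 t) (at t)"
    and sm1: "smooth_on I \<phi>1" and pos: "\<forall>t\<in>I. \<phi>1 t > 0"
    and inv: "\<forall>q\<in>J. g q \<in> I \<and> \<phi> (g q) = q"
    and cont: "\<forall>q\<in>J. isCont g q"
  shows "smooth_on J g"
proof -
  have gder: "(g has_real_derivative inverse (\<phi>1 (g q))) (at q)" if q: "q \<in> J" for q
  proof -
    obtain e where e: "e > 0" "ball q e \<subseteq> J" using J q open_contains_ball by blast
    show ?thesis
    proof (rule DERIV_inverse_function[where f=\<phi> and g=g and x=q and a="q - e" and b="q + e"])
      show "(\<phi> has_real_derivative \<phi>1 (g q)) (at (g q))" using der inv q by blast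
      show "\<phi>1 (g q) \<noteq> 0" using pos inv q by force
      show "q - e < q" "q < q + e" using e by auto
      fix y assume "q - e < y" "y < q + e"
      then have "y \<in> J" using e(2) by (auto simp: dist_real_def subset_iff)
      then show "\<phi> (g y) = y" using inv by blast
    next
      show "isCont g q" using cont q by blast
    qed
  qed
  let ?Q = "\<lambda>h. \<exists>R::real\<Rightarrow>real. smooth_on I R \<and> h = (\<lambda>q. R (g q))"
  show ?thesis
  proof (rule smooth_on_coinduct[where Q="?Q", OF J])
    have "smooth_on I (\<lambda>t. t)" by (rule smooth_on_linear[OF I]) simp
    then show "?Q g" by blast
  next
    fix h assume "?Q h"
    then obtain R where R: "smooth_on I R" "h = (\<lambda>q. R (g q))" by blast
    obtain R1 where R1: "\<forall>x\<in>I. (R has_real_derivative R1 x) (at x)" "smooth_on I R1"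
      using smooth_1d_elim[OF R(1)] by blast
    define Rt where "Rt t = R1 t * \<phi>1 t powr (-1)" for t
    have smRt: "smooth_on I Rt" unfolding Rt_def
      by (rule smooth_on_mult[OF R1(2) smooth_powr_compose[OF sm1]]) (use pos in auto)
    show "\<exists>h'. (\<forall>x\<in>J. (h has_derivative (\<lambda>v. h' v x)) (at x)) \<and> (\<forall>v. ?Q (h' v))"
    proof (intro exI[of _ "\<lambda>v q. v * Rt (g q)"] conjI ballI allI)
      fix q assume q: "q \<in> J"
      have "((\<lambda>q. R (g q)) has_real_derivative R1 (g q) * inverse (\<phi>1 (g q))) (at q)"
        using DERIV_chain2[OF R1(1)[rule_format] gder[OF q]] inv q by blast
      moreover have "R1 (g q) * inverse (\<phi>1 (g q)) = Rt (g q)"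
      proof -
        have "\<phi>1 (g q) > 0" using pos inv q by blast
        then show ?thesis unfolding Rt_def by (simp add: powr_minus_divide divide_inverse)
      qed
      ultimately show "(h has_derivative (\<lambda>v. v * Rt (g q))) (at q)"
        unfolding R(2) by (simp add: has_real_derivative_alt)
    next
      fix v
      have "smooth_on I (\<lambda>t. v * Rt t)" by (rule smooth_on_mult[OF smooth_on_const[OF I] smRt])
      then show "?Q (\<lambda>q. v * Rt (g q))" by blast
    qed
  qed
qed



locale blocks =
  fixes \<kappa> :: "nat \<Rightarrow> int" and blk :: "'n::finite \<Rightarrow> nat" and k s :: nat
  assumes blk_range: "\<forall>j. blk j \<in> {1..k}"
    and kappa_pos: "\<forall>i\<in>{1..s}. \<kappa> i > 0"
    and kappa_neg: "\<forall>i\<in>{s<..k}. \<kappa> i < 0"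
begin

abbreviation "P \<equiv> sqn_plus \<kappa> blk s"
abbreviation "M \<equiv> sqn_minus \<kappa> blk s"
abbreviation "zp \<equiv> zplus blk s"
abbreviation "zm \<equiv> zminus blk s"

lemma kp: "blk j \<le> s \<Longrightarrow> \<kappa> (blk j) > 0"
  using blk_range kappa_pos by force
lemma km: "s < blk j \<Longrightarrow> \<kappa> (blk j) < 0"
  using blk_range kappa_neg by force

lemma zp_nth[simp]: "zp z $ j = (if blk j \<le> s then z $ j else 0)"
  by (simp add: zplus_def)
lemma zm_nth[simp]: "zm z $ j = (if blk j \<le> s then 0 else z $ j)"
  by (simp add: zminus_def)

lemma zp_zero[simp]: "zp 0 = 0" by (simp add: vec_eq_iff)
lemma zm_zero[simp]: "zm 0 = 0" by (simp add: vec_eq_iff)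

lemma zp_zm_sum: "zp z + zm z = z"
  by (simp add: vec_eq_iff)

lemma P_nonneg: "P z \<ge> 0"
  unfolding sqn_plus_def by (intro sum_nonneg) (auto dest: kp intro!: mult_nonneg_nonneg)
lemma M_nonneg: "M z \<ge> 0"
  unfolding sqn_minus_def by (intro sum_nonneg) auto

lemma P_zero_iff: "P z = 0 \<longleftrightarrow> zp z = 0"
proof -
  have "P z = 0 \<longleftrightarrow> (\<forall>j\<in>{j. blk j \<le> s}. real_of_int (\<kappa> (blk j)) * (cmod (z $ j))\<^sup>2 = 0)"
    unfolding sqn_plus_def by (rule sum_nonneg_eq_0_iff) (auto dest: kp intro!: mult_nonneg_nonneg)
  also have "\<dots> \<longleftrightarrow> (\<forall>j. blk j \<le> s \<longrightarrow> z $ j = 0)"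
    using kp by (metis (mono_tags, lifting) mem_Collect_eq mult_eq_0_iff norm_eq_zero of_int_0_eq_iff order_less_irrefl zero_eq_power2)
  also have "\<dots> \<longleftrightarrow> zp z = 0" by (auto simp: vec_eq_iff)
  finally show ?thesis .
qed

lemma M_zero_iff: "M z = 0 \<longleftrightarrow> zm z = 0"
proof -
  have "M z = 0 \<longleftrightarrow> (\<forall>j\<in>{j. s < blk j}. real_of_int \<bar>\<kappa> (blk j)\<bar> * (cmod (z $ j))\<^sup>2 = 0)"
    unfolding sqn_minus_def by (rule sum_nonneg_eq_0_iff) auto
  also have "\<dots> \<longleftrightarrow> (\<forall>j. s < blk j \<longrightarrow> z $ j = 0)"
    using km by (metis (mono_tags, lifting) abs_eq_0 mem_Collect_eq mult_eq_0_iff norm_eq_zero of_int_0_eq_iff order_less_irrefl zero_eq_power2)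
  also have "\<dots> \<longleftrightarrow> zm z = 0" by (auto simp: vec_eq_iff not_le)
  finally show ?thesis .
qed

lemma P_pos_iff: "P z > 0 \<longleftrightarrow> zp z \<noteq> 0"
  using P_nonneg[of z] P_zero_iff[of z] by linarith
lemma M_pos_iff: "M z > 0 \<longleftrightarrow> zm z \<noteq> 0"
  using M_nonneg[of z] M_zero_iff[of z] by linarith

lemma P_comb: "P (a *\<^sub>R zp z + b *\<^sub>R zm z) = a\<^sup>2 * P z"
  unfolding sqn_plus_def sum_distrib_left
  by (rule sum.cong) (auto simp: power_mult_distrib)

lemma M_comb: "M (a *\<^sub>R zp z + b *\<^sub>R zm z) = b\<^sup>2 * M z"
  unfolding sqn_minus_def sum_distrib_left
  by (rule sum.cong) (auto simp: power_mult_distrib)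

lemma zp_comb: "zp (a *\<^sub>R zp z + b *\<^sub>R zm z) = a *\<^sub>R zp z"
  by (simp add: vec_eq_iff)
lemma zm_comb: "zm (a *\<^sub>R zp z + b *\<^sub>R zm z) = b *\<^sub>R zm z"
  by (simp add: vec_eq_iff)

lemma psi_alt: "psi \<kappa> blk s z = (if P z > 0 \<and> M z > 0 then
     ((M z / P z) powr (1/4)) *\<^sub>R zp z + ((P z / M z) powr (1/4)) *\<^sub>R zm z else 0)"
  unfolding psi_def P_pos_iff M_pos_iff by simp

lemma psi_zero_iff: "psi \<kappa> blk s z = 0 \<longleftrightarrow> zp z = 0 \<or> zm z = 0"
proof (cases "zp z = 0 \<or> zm z = 0")
  case True then show ?thesis by (auto simp: psi_def)
next
  case False
  then have "P z > 0" "M z > 0" using P_pos_iff M_pos_iff by auto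
  then have "zp (psi \<kappa> blk s z) = ((M z / P z) powr (1/4)) *\<^sub>R zp z"
    unfolding psi_alt by (simp add: zp_comb)
  moreover have "(M z / P z) powr (1/4) > 0" using \<open>P z > 0\<close> \<open>M z > 0\<close> by simp
  ultimately have "zp (psi \<kappa> blk s z) \<noteq> 0" using False by auto
  then show ?thesis using False by auto
qed

end



lemma unitary_cols:
  assumes "cadjoint A ** A = mat 1"
  shows "(\<Sum>j\<in>UNIV. cnj (A$j$m) * A$j$l) = (if m = l then 1 else 0)"
proof -
  have "(cadjoint A ** A) $ m $ l = mat 1 $ m $ l" using assms by simp
  then show ?thesis by (simp add: matrix_matrix_mult_def cadjoint_def mat_def)
qed

lemma weighted_invariant:
  fixes w :: "nat \<Rightarrow> real" and A :: "complex^'n::finite^'n"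
  assumes A: "A \<in> G_set blk"
  shows "(\<Sum>j\<in>UNIV. w (blk j) * (cmod ((A *v z)$j))\<^sup>2) = (\<Sum>j\<in>UNIV. w (blk j) * (cmod (z$j))\<^sup>2)"
proof -
  have U: "cadjoint A ** A = mat 1" and bd: "\<And>i j. blk i \<noteq> blk j \<Longrightarrow> A $ i $ j = 0"
    using A by (auto simp: G_set_def)
  let ?c = "\<lambda>i. complex_of_real (w i)"
  have "complex_of_real (\<Sum>j\<in>UNIV. w (blk j) * (cmod ((A *v z)$j))\<^sup>2)
      = (\<Sum>j\<in>UNIV. ?c (blk j) * ((A *v z)$j * cnj ((A *v z)$j)))"
    by (simp only: of_real_sum of_real_mult complex_norm_square)
  also have "\<dots> = (\<Sum>j\<in>UNIV. \<Sum>m\<in>UNIV. \<Sum>l\<in>UNIV. ?c (blk j) * (A$j$l * z$l * (cnj (A$j$m) * cnj (z$m))))"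
    by (simp add: matrix_vector_mult_def sum_distrib_left sum_distrib_right mult_ac)
  also have "\<dots> = (\<Sum>j\<in>UNIV. \<Sum>m\<in>UNIV. \<Sum>l\<in>UNIV. ?c (blk l) * (A$j$l * z$l * (cnj (A$j$m) * cnj (z$m))))"
  proof (intro sum.cong refl)
    fix j l m
    show "?c (blk j) * (A$j$l * z$l * (cnj (A$j$m) * cnj (z$m))) = ?c (blk l) * (A$j$l * z$l * (cnj (A$j$m) * cnj (z$m)))"
      by (cases "blk j = blk l") (auto simp: bd)
  qed
  also have "\<dots> = (\<Sum>m\<in>UNIV. \<Sum>j\<in>UNIV. \<Sum>l\<in>UNIV. ?c (blk l) * (A$j$l * z$l * (cnj (A$j$m) * cnj (z$m))))"
    by (rule sum.swap)
  also have "\<dots> = (\<Sum>m\<in>UNIV. \<Sum>l\<in>UNIV. \<Sum>j\<in>UNIV. ?c (blk l) * (A$j$l * z$l * (cnj (A$j$m) * cnj (z$m))))"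
    by (rule sum.cong[OF refl], rule sum.swap)
  also have "\<dots> = (\<Sum>l\<in>UNIV. \<Sum>m\<in>UNIV. \<Sum>j\<in>UNIV. ?c (blk l) * (A$j$l * z$l * (cnj (A$j$m) * cnj (z$m))))"
    by (rule sum.swap)
  also have "\<dots> = (\<Sum>l\<in>UNIV. \<Sum>m\<in>UNIV. ?c (blk l) * z$l * cnj (z$m) * (\<Sum>j\<in>UNIV. cnj (A$j$m) * A$j$l))"
    by (simp add: sum_distrib_left mult_ac)
  also have "\<dots> = (\<Sum>l\<in>UNIV. \<Sum>m\<in>UNIV. (if m = l then ?c (blk l) * z$l * cnj (z$l) else 0))"
    by (simp add: unitary_cols[OF U] if_distrib cong: if_cong)
  also have "\<dots> = (\<Sum>l\<in>UNIV. ?c (blk l) * (z$l * cnj (z$l)))"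
    by (simp add: mult_ac)
  also have "\<dots> = complex_of_real (\<Sum>j\<in>UNIV. w (blk j) * (cmod (z$j))\<^sup>2)"
    by (simp only: of_real_sum of_real_mult complex_norm_square)
  finally show ?thesis using of_real_eq_iff by blast
qed

context blocks
begin

definition "wP i = (if i \<le> s then real_of_int (\<kappa> i) else 0)"
definition "wM i = (if s < i then real_of_int \<bar>\<kappa> i\<bar> else 0)"

lemma P_weighted: "P z = (\<Sum>j\<in>UNIV. wP (blk j) * (cmod (z$j))\<^sup>2)"
  unfolding sqn_plus_def wP_def
  by (simp add: if_distrib[of "\<lambda>x. x * _"] sum.If_cases Collect_conj_eq cong: if_cong)

lemma M_weighted: "M z = (\<Sum>j\<in>UNIV. wM (blk j) * (cmod (z$j))\<^sup>2)"
  unfolding sqn_minus_def wM_def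
  by (simp add: if_distrib[of "\<lambda>x. x * _"] sum.If_cases Collect_conj_eq cong: if_cong)

lemma s1_norm: "cmod lam = 1 \<Longrightarrow> cmod (s1_act \<kappa> blk lam z $ j) = cmod (z $ j)"
  by (simp add: s1_act_def norm_mult norm_power_int)

lemma weighted_GS:
  assumes "A \<in> G_set blk" "cmod lam = 1"
  shows "(\<Sum>j\<in>UNIV. w (blk j) * (cmod ((GS1_act \<kappa> blk A lam z)$j))\<^sup>2) = (\<Sum>j\<in>UNIV. w (blk j) * (cmod (z$j))\<^sup>2)"
  unfolding GS1_act_def weighted_invariant[OF assms(1)] s1_norm[OF assms(2)] ..

lemma P_GS: "A \<in> G_set blk \<Longrightarrow> cmod lam = 1 \<Longrightarrow> P (GS1_act \<kappa> blk A lam z) = P z"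
  unfolding P_weighted by (rule weighted_GS)
lemma M_GS: "A \<in> G_set blk \<Longrightarrow> cmod lam = 1 \<Longrightarrow> M (GS1_act \<kappa> blk A lam z) = M z"
  unfolding M_weighted by (rule weighted_GS)

lemma GS_linear: "linear (GS1_act \<kappa> blk A lam)"
proof -
  have "linear (s1_act \<kappa> blk lam)"
    by (rule linearI) (auto simp: s1_act_def vec_eq_iff algebra_simps scaleR_conv_of_real)
  then show ?thesis unfolding GS1_act_def[abs_def]
    using linear_compose[of "s1_act \<kappa> blk lam" "\<lambda>x. A *v x"] by (simp add: o_def)
qed

lemma zp_GS:
  assumes "A \<in> G_set blk"
  shows "zp (GS1_act \<kappa> blk A lam z) = GS1_act \<kappa> blk A lam (zp z)"
proof -
  have bd: "\<And>i j. blk i \<noteq> blk j \<Longrightarrow> A $ i $ j = 0" using assms by (auto simp: G_set_def)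
  have "(A *v zp y) $ j = (if blk j \<le> s then (A *v y) $ j else 0)" for y j
    by (cases "blk j \<le> s") (auto simp: matrix_vector_mult_def bd intro!: sum.cong sum.neutral)
  then have "zp (A *v y) = A *v zp y" for y by (simp add: vec_eq_iff)
  moreover have "zp (s1_act \<kappa> blk lam y) = s1_act \<kappa> blk lam (zp y)" for y
    by (simp add: vec_eq_iff s1_act_def)
  ultimately show ?thesis by (simp add: GS1_act_def)
qed

lemma zm_GS:
  assumes "A \<in> G_set blk"
  shows "zm (GS1_act \<kappa> blk A lam z) = GS1_act \<kappa> blk A lam (zm z)"
proof -
  have bd: "\<And>i j. blk i \<noteq> blk j \<Longrightarrow> A $ i $ j = 0" using assms by (auto simp: G_set_def)
  have "(A *v zm y) $ j = (if blk j \<le> s then 0 else (A *v y) $ j)" for y j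
    by (cases "blk j \<le> s") (auto simp: matrix_vector_mult_def bd intro!: sum.cong sum.neutral)
  then have "zm (A *v y) = A *v zm y" for y by (simp add: vec_eq_iff)
  moreover have "zm (s1_act \<kappa> blk lam y) = s1_act \<kappa> blk lam (zm y)" for y
    by (simp add: vec_eq_iff s1_act_def)
  ultimately show ?thesis by (simp add: GS1_act_def)
qed

lemma psi_GS:
  assumes "A \<in> G_set blk" "cmod lam = 1"
  shows "psi \<kappa> blk s (GS1_act \<kappa> blk A lam z) = GS1_act \<kappa> blk A lam (psi \<kappa> blk s z)"
proof -
  interpret L: linear "GS1_act \<kappa> blk A lam" by (rule GS_linear)
  show ?thesis
    unfolding psi_alt P_GS[OF assms] M_GS[OF assms] zp_GS[OF assms(1)] zm_GS[OF assms(1)]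
    by (simp add: L.add L.scale L.zero)
qed

end



locale rhoset = blocks \<kappa> blk k s for \<kappa> :: "nat \<Rightarrow> int" and blk :: "'n::finite \<Rightarrow> nat" and k s +
  fixes \<delta> \<epsilon> C :: real and \<rho> :: "real \<Rightarrow> real"
  assumes delta_pos: "\<delta> > 0"
    and rho_smooth: "smooth_on UNIV \<rho>"
    and rho_one: "\<forall>t. t < \<delta> \<longrightarrow> \<rho> t = 1"
    and rho_zero: "\<forall>t. t > 2 * \<delta> \<longrightarrow> \<rho> t = 0"
    and rho_decr: "\<forall>t. deriv \<rho> t \<le> 0"
    and C_def: "C = (SUP t. \<bar>deriv \<rho> t\<bar>)"
    and eps_nz: "\<epsilon> \<noteq> 0"
    and eps_C: "\<bar>\<epsilon>\<bar> < inverse C"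
    and eps_delta: "\<bar>\<epsilon>\<bar> < \<delta>"
begin

definition "rho1 = (SOME b1. (\<forall>x\<in>UNIV. (\<rho> has_real_derivative b1 x) (at x)) \<and> smooth_on UNIV b1)"

lemma rho1: "(\<forall>x\<in>UNIV. (\<rho> has_real_derivative rho1 x) (at x)) \<and> smooth_on UNIV rho1"
  unfolding rho1_def by (rule someI_ex[OF smooth_1d_elim[OF rho_smooth]])

lemma rho_der: "(\<rho> has_real_derivative rho1 x) (at x)" using rho1 by blast
lemma rho1_smooth: "smooth_on UNIV rho1" using rho1 by blast

lemma deriv_rho: "deriv \<rho> = rho1"
  using rho_der DERIV_imp_deriv by blast

lemma rho1_nonpos: "rho1 t \<le> 0" using rho_decr deriv_rho by simp

lemma rho_le1: "\<rho> t \<le> 1"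
proof -
  define a where "a = min t (\<delta>/2)"
  have "\<rho> t \<le> \<rho> a"
    by (rule DERIV_nonpos_imp_nonincreasing[of a t \<rho>]) (use rho_der rho1_nonpos in \<open>auto simp: a_def\<close>)
  moreover have "\<rho> a = 1" using rho_one delta_pos by (auto simp: a_def)
  ultimately show ?thesis by simp
qed

lemma rho_ge0: "\<rho> t \<ge> 0"
proof -
  define b where "b = max t (3*\<delta>)"
  have "\<rho> b \<le> \<rho> t"
    by (rule DERIV_nonpos_imp_nonincreasing[of t b \<rho>]) (use rho_der rho1_nonpos in \<open>auto simp: b_def\<close>)
  moreover have "\<rho> b = 0" using rho_zero delta_pos by (auto simp: b_def)
  ultimately show ?thesis by simp
qed

lemma rho1_outside: "t < \<delta> \<or> t > 2 * \<delta> \<Longrightarrow> rho1 t = 0"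
proof -
  assume "t < \<delta> \<or> t > 2 * \<delta>"
  then obtain S c where S: "open S" "t \<in> S" "\<And>x. x \<in> S \<Longrightarrow> \<rho> x = c"
  proof
    assume "t < \<delta>" then show ?thesis using rho_one by (intro that[of "{..<\<delta>}" 1]) auto
  next
    assume "t > 2 * \<delta>" then show ?thesis using rho_zero by (intro that[of "{2*\<delta><..}" 0]) auto
  qed
  have "((\<lambda>x. c) has_real_derivative 0) (at t)" by simp
  then have "(\<rho> has_real_derivative 0) (at t)"
    unfolding has_field_derivative_def
    by (rule has_derivative_transform_within_open[OF _ S(1,2)]) (use S(3) in auto)
  then show ?thesis using rho_der DERIV_unique by blast
qed

lemma rho1_bdd: "bdd_above (range (\<lambda>t. \<bar>rho1 t\<bar>))"
proof -
  have "compact (rho1 ` {\<delta>..2*\<delta>})"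
    by (rule compact_continuous_image)
      (use smooth_on_imp_continuous_on[OF rho1_smooth] continuous_on_subset in blast, simp)
  then obtain B where B: "\<forall>x\<in>rho1 ` {\<delta>..2*\<delta>}. norm x \<le> B"
    using compact_imp_bounded bounded_iff by blast
  have "\<bar>rho1 t\<bar> \<le> max B 0" for t
  proof (cases "t < \<delta> \<or> t > 2 * \<delta>")
    case True then show ?thesis using rho1_outside by simp
  next
    case False then have "t \<in> {\<delta>..2*\<delta>}" by auto
    then show ?thesis using B by force
  qed
  then show ?thesis by (intro bdd_aboveI[where M="max B 0"]) auto
qed

lemma rho1_le_C: "\<bar>rho1 t\<bar> \<le> C"
  unfolding C_def deriv_rho by (rule cSUP_upper[OF _ rho1_bdd]) simp

lemma C_pos: "C > 0"
proof -
  have "inverse C > 0" using eps_C eps_nz by (meson abs_ge_zero le_less_trans)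
  then show ?thesis by simp
qed

lemma eps_rho1: "\<bar>\<epsilon> * rho1 t\<bar> < 1"
proof -
  have "\<bar>\<epsilon> * rho1 t\<bar> = \<bar>\<epsilon>\<bar> * \<bar>rho1 t\<bar>" by (simp add: abs_mult)
  also have "\<dots> \<le> \<bar>\<epsilon>\<bar> * C" using rho1_le_C by (simp add: mult_left_mono)
  also have "\<dots> < inverse C * C" using eps_C C_pos by (intro mult_strict_right_mono) auto
  also have "\<dots> = 1" using C_pos by simp
  finally show ?thesis .
qed

lemma eps_rho: "\<bar>\<epsilon> * \<rho> t\<bar> \<le> \<bar>\<epsilon>\<bar>"
  using rho_ge0[of t] rho_le1[of t] by (simp add: abs_mult mult_left_le)

end



context rhoset
begin

abbreviation "Ft \<equiv> Phi_tilde \<kappa> blk s \<epsilon> \<rho>"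

lemma Ft_eq: "Ft z = P z - M z + \<epsilon> * \<rho> (P z + M z)"
  by (simp add: Phi_tilde_def)

definition "dP z v = (\<Sum>j\<in>{j. blk j \<le> s}. real_of_int (\<kappa> (blk j)) * (2 * ((z$j) \<bullet> (v$j))))"
definition "dM z v = (\<Sum>j\<in>{j. s < blk j}. real_of_int \<bar>\<kappa> (blk j)\<bar> * (2 * ((z$j) \<bullet> (v$j))))"
definition "dF z v = dP z v - dM z v + \<epsilon> * ((dP z v + dM z v) * rho1 (P z + M z))"

lemma sq_der: "((\<lambda>z::complex^'n. (cmod (z$j))\<^sup>2) has_derivative (\<lambda>v. 2 * ((z$j) \<bullet> (v$j)))) (at z)"
proof -
  have l: "((\<lambda>z::complex^'n. z$j) has_derivative (\<lambda>v. v$j)) (at z)"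
    by (rule bounded_linear_imp_has_derivative) (rule bounded_linear_vec_nth)
  have "((\<lambda>z::complex^'n. (z$j) \<bullet> (z$j)) has_derivative (\<lambda>v. (z$j) \<bullet> (v$j) + (v$j) \<bullet> (z$j))) (at z)"
    by (rule has_derivative_inner[OF l l])
  then show ?thesis unfolding power2_norm_eq_inner by (simp add: inner_commute)
qed

lemma P_der: "(P has_derivative dP z) (at z)"
  unfolding sqn_plus_def[abs_def] dP_def[abs_def]
  by (intro has_derivative_sum has_derivative_mult_right sq_der)

lemma M_der: "(M has_derivative dM z) (at z)"
  unfolding sqn_minus_def[abs_def] dM_def[abs_def]
  by (intro has_derivative_sum has_derivative_mult_right sq_der)

lemma Ft_der: "(Ft has_derivative dF z) (at z)"
proof -
  have r: "(\<rho> has_derivative (\<lambda>v. v * rho1 (P z + M z))) (at (P z + M z))"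
    using rho_der has_real_derivative_alt by blast
  have pm: "((\<lambda>z. P z + M z) has_derivative (\<lambda>v. dP z v + dM z v)) (at z)"
    by (intro has_derivative_add P_der M_der)
  have "((\<lambda>z. \<rho> (P z + M z)) has_derivative (\<lambda>v. (dP z v + dM z v) * rho1 (P z + M z))) (at z)"
    using has_derivative_compose[OF pm r] by (simp add: o_def)
  then have "((\<lambda>z. P z - M z + \<epsilon> * \<rho> (P z + M z)) has_derivative dF z) (at z)"
    unfolding dF_def[abs_def]
    by (intro has_derivative_add has_derivative_diff P_der M_der has_derivative_mult_right)
  then show ?thesis unfolding Phi_tilde_def[abs_def] by simp
qed

lemma dP_zp: "dP z (zp z) = 2 * P z"
  unfolding dP_def sqn_plus_def sum_distrib_left
  by (rule sum.cong) (auto simp: power2_norm_eq_inner)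
lemma dM_zp: "dM z (zp z) = 0"
  unfolding dM_def by (rule sum.neutral) auto
lemma dP_zm: "dP z (zm z) = 0"
  unfolding dP_def by (rule sum.neutral) auto
lemma dM_zm: "dM z (zm z) = 2 * M z"
  unfolding dM_def sqn_minus_def sum_distrib_left
  by (rule sum.cong) (auto simp: power2_norm_eq_inner)

lemma dF_zero: "dF 0 v = 0"
  by (simp add: dF_def dP_def dM_def)

lemma P_zero[simp]: "P 0 = 0" using P_zero_iff by simp
lemma M_zero[simp]: "M 0 = 0" using M_zero_iff by simp

lemma crit_iff: "critical_point Ft z \<longleftrightarrow> z = 0"
proof
  assume z: "z = 0"
  show "critical_point Ft z"
    unfolding critical_point_def
  proof
    assume "\<exists>D. (Ft has_derivative D) (at z) \<and> surj D"
    then obtain D where D: "(Ft has_derivative D) (at z)" "surj D" by blast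
    have "D = dF z" using has_derivative_unique[OF D(1) Ft_der] .
    then have "D v = 0" for v using z dF_zero by simp
    then show False using D(2) by (metis UNIV_I image_iff zero_neq_one)
  qed
next
  assume "critical_point Ft z"
  then have nc: "\<not> surj (dF z)" unfolding critical_point_def using Ft_der by blast
  show "z = 0"
  proof (rule ccontr)
    assume "z \<noteq> 0"
    have "\<exists>v0. dF z v0 \<noteq> 0"
    proof (cases "zp z = 0")
      case False
      then have p: "P z > 0" using P_pos_iff by blast
      have "dF z (zp z) = 2 * P z * (1 + \<epsilon> * rho1 (P z + M z))"
        by (simp add: dF_def dP_zp dM_zp algebra_simps)
      moreover have "1 + \<epsilon> * rho1 (P z + M z) > 0" using eps_rho1[of "P z + M z"] by linarith
      ultimately show ?thesis using p by (intro exI[of _ "zp z"]) simp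
    next
      case True
      then have "zm z \<noteq> 0" using \<open>z \<noteq> 0\<close> zp_zm_sum[of z] by auto
      then have m: "M z > 0" using M_pos_iff by blast
      have "dF z (zm z) = - 2 * M z * (1 - \<epsilon> * rho1 (P z + M z))"
        by (simp add: dF_def dP_zm dM_zm algebra_simps)
      moreover have "1 - \<epsilon> * rho1 (P z + M z) > 0" using eps_rho1[of "P z + M z"] by linarith
      ultimately show ?thesis using m by (intro exI[of _ "zm z"]) simp
    qed
    then obtain v0 where v0: "dF z v0 \<noteq> 0" by blast
    have lin: "linear (dF z)" using Ft_der has_derivative_linear by blast
    have "surj (dF z)"
    proof (rule surjI)
      fix y
      show "dF z ((y / dF z v0) *\<^sub>R v0) = y"
        using linear_scale[OF lin] v0 by simp
    qed
    then show False using nc by blast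
  qed
qed

end



context rhoset
begin

definition "cf j = (if blk j \<le> s then 2 * real_of_int (\<kappa> (blk j)) else - 2 * real_of_int \<bar>\<kappa> (blk j)\<bar>)"
definition grad :: "complex^'n \<Rightarrow> complex^'n" where "grad y = (\<chi> j. cf j *\<^sub>R (y $ j))"

lemma cf_nz: "cf j \<noteq> 0"
  using kp[of j] km[of j] by (cases "blk j \<le> s") (auto simp: cf_def)

lemma grad_inner: "grad y \<bullet> v = dP y v - dM y v"
proof -
  have "grad y \<bullet> v = (\<Sum>j\<in>UNIV. (if blk j \<le> s then real_of_int (\<kappa> (blk j)) * (2 * ((y$j) \<bullet> (v$j)))
        else - (real_of_int \<bar>\<kappa> (blk j)\<bar> * (2 * ((y$j) \<bullet> (v$j))))))"
    unfolding inner_vec_def grad_def by (rule sum.cong) (auto simp: cf_def)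
  also have "\<dots> = dP y v - dM y v"
    unfolding dP_def dM_def by (simp add: sum.If_cases sum_negf not_le Collect_neg_eq[symmetric])
  finally show ?thesis .
qed

lemma grad_linear: "linear grad"
  by (rule linearI) (auto simp: grad_def vec_eq_iff algebra_simps)

lemma grad_inj: "inj grad"
proof (rule injI)
  fix x y assume "grad x = grad y"
  then have "cf j *\<^sub>R x $ j = cf j *\<^sub>R y $ j" for j by (auto simp: grad_def vec_eq_iff)
  then show "x = y" using cf_nz by (metis scaleR_cancel_left vec_eq_iff)
qed

lemma PM_cont: "continuous_on UNIV (\<lambda>z. P z + M z)"
proof -
  have "isCont (\<lambda>z. P z + M z) z" for z
    using has_derivative_continuous[OF has_derivative_add[OF P_der M_der]] .
  then show ?thesis by (simp add: continuous_at_imp_continuous_on)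
qed

lemma nondeg: "nondegenerate_critical_point Ft 0"
  unfolding nondegenerate_critical_point_def
proof (intro conjI exI[of _ "{z. P z + M z < \<delta>}"] exI[of _ grad] exI[of _ grad])
  show "critical_point Ft 0" using crit_iff by simp
  show "open {z. P z + M z < \<delta>}"
    by (rule open_Collect_less[OF PM_cont]) simp
  show "0 \<in> {z. P z + M z < \<delta>}" using delta_pos by simp
  show "(grad has_derivative grad) (at 0)"
    using grad_linear linear_conv_bounded_linear bounded_linear_imp_has_derivative by blast
  show "inj grad" by (rule grad_inj)
  show "\<forall>y\<in>{z. P z + M z < \<delta>}. (Ft has_derivative (\<lambda>v. grad y \<bullet> v)) (at y)"
  proof
    fix y assume y: "y \<in> {z. P z + M z < \<delta>}"
    have "((\<lambda>z. P z - M z + \<epsilon>) has_derivative (\<lambda>v. dP y v - dM y v + 0)) (at y)"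
      by (intro has_derivative_add has_derivative_diff P_der M_der has_derivative_const)
    then have "((\<lambda>z. P z - M z + \<epsilon>) has_derivative (\<lambda>v. grad y \<bullet> v)) (at y)"
      by (simp add: grad_inner)
    moreover have "P x - M x + \<epsilon> = Ft x" if x: "x \<in> {z. P z + M z < \<delta>}" for x
    proof -
      have "\<rho> (P x + M x) = 1" using rho_one x by simp
      then show ?thesis by (simp add: Ft_eq)
    qed
    ultimately show "(Ft has_derivative (\<lambda>v. grad y \<bullet> v)) (at y)"
      by (rule has_derivative_transform_within_open[OF _ open_Collect_less[OF PM_cont continuous_on_const] y]) blast+
  qed
qed

lemma Ft_zero: "Ft 0 = \<epsilon>"
  using rho_one delta_pos by (simp add: Ft_eq)

lemma regular: "regular_value Ft 0"
  unfolding regular_value_def using crit_iff Ft_zero eps_nz by metis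

lemma level_big:
  "{z. Ft z = 0 \<and> P z + M z > 2 * \<delta>} = {z. Phi \<kappa> blk s z = 0 \<and> P z + M z > 2 * \<delta>}"
proof -
  have "Ft z = Phi \<kappa> blk s z" if "P z + M z > 2 * \<delta>" for z
  proof -
    have "\<rho> (P z + M z) = 0" using that rho_zero by simp
    then show ?thesis by (simp add: Ft_eq Phi_def)
  qed
  then show ?thesis by (intro Collect_cong) metis
qed

lemma level_small:
  "{z. Ft z = 0 \<and> P z + M z < \<delta>} = {z. Phi \<kappa> blk s z = - \<epsilon> \<and> P z + M z < \<delta>}"
proof -
  have "Ft z = Phi \<kappa> blk s z + \<epsilon>" if "P z + M z < \<delta>" for z
  proof -
    have "\<rho> (P z + M z) = 1" using that rho_one by simp
    then show ?thesis by (simp add: Ft_eq Phi_def)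
  qed
  then show ?thesis by (intro Collect_cong) (metis add.commute add_left_cancel add.right_neutral minus_add_cancel)
qed

end



lemma quart: "0 < (x::real) \<Longrightarrow> (x powr (1/4)) ^ 4 = x"
proof -
  assume x: "0 < x"
  have "(x powr (1/4)) ^ 4 = (x powr (1/4)) powr (real 4)"
    using x by (simp add: powr_realpow)
  also have "\<dots> = x" using x by (simp add: powr_powr)
  finally show ?thesis .
qed

context rhoset
begin

definition "Iset = {\<bar>\<epsilon>\<bar><..}"
definition "psf t = (t\<^sup>2 - \<epsilon>\<^sup>2 * (\<rho> t)\<^sup>2) / 4"
definition "psf1 t = (t - \<epsilon>\<^sup>2 * \<rho> t * rho1 t) / 2"
definition "psinv = inv_into Iset psf"

lemma open_I: "open Iset" by (simp add: Iset_def)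

lemma psf_der: "(psf has_real_derivative psf1 t) (at t)"
  unfolding psf_def[abs_def] psf1_def
  by (auto intro!: derivative_eq_intros rho_der simp: field_simps power2_eq_square)

lemma psf1_pos: "t \<in> Iset \<Longrightarrow> psf1 t > 0"
proof -
  assume t: "t \<in> Iset"
  have "\<epsilon>\<^sup>2 * \<rho> t * rho1 t \<le> \<bar>\<epsilon>\<bar> * \<rho> t * \<bar>\<epsilon> * rho1 t\<bar>"
    using rho_ge0[of t] by (simp add: abs_mult power2_eq_square mult_ac)
      (metis abs_ge_self abs_mult_self_eq mult.assoc mult_left_mono zero_le_mult_iff abs_ge_zero)
  also have "\<dots> \<le> \<bar>\<epsilon>\<bar> * 1 * 1"
    using rho_ge0[of t] rho_le1[of t] eps_rho1[of t]
    by (intro mult_mono) auto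
  finally show ?thesis using t by (simp add: psf1_def Iset_def)
qed

lemma psf1_smooth: "smooth_on Iset psf1"
proof -
  have r: "smooth_on Iset \<rho>" by (rule smooth_on_subset[OF rho_smooth open_I]) simp
  have r1: "smooth_on Iset rho1" by (rule smooth_on_subset[OF rho1_smooth open_I]) simp
  have id: "smooth_on Iset (\<lambda>t. t)" by (rule smooth_on_linear[OF open_I]) simp
  have "smooth_on Iset (\<lambda>t. (1/2) *\<^sub>R (t - (\<epsilon>\<^sup>2 *\<^sub>R (\<rho> t * rho1 t))))"
    by (intro smooth_on_cmult smooth_on_diff id smooth_on_mult r r1)
  then show ?thesis by (rule smooth_on_cong) (simp add: psf1_def)
qed

lemma psf_mono: "a \<in> Iset \<Longrightarrow> b \<in> Iset \<Longrightarrow> a < b \<Longrightarrow> psf a < psf b"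
proof (rule DERIV_pos_imp_increasing[of a b psf])
  fix x assume "a \<in> Iset" "a \<le> x"
  then have "x \<in> Iset" by (auto simp: Iset_def)
  then show "\<exists>y. (psf has_real_derivative y) (at x) \<and> 0 < y"
    using psf_der psf1_pos by blast
qed

lemma psf_inj: "inj_on psf Iset"
  by (metis inj_onI linorder_neqE_linordered_idom order_less_irrefl psf_mono)

lemma psf_cont: "isCont psf t"
  using psf_der DERIV_isCont by blast

lemma psf_surj: "r > 0 \<Longrightarrow> \<exists>t\<in>Iset. psf t = r"
proof -
  assume r: "r > 0"
  define h where "h = min ((\<delta> - \<bar>\<epsilon>\<bar>)/2) (r/\<delta>)"
  have h1: "h \<le> (\<delta> - \<bar>\<epsilon>\<bar>)/2" unfolding h_def by (rule min.cobounded1)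
  have h2: "h \<le> r/\<delta>" unfolding h_def by (rule min.cobounded2)
  have h0: "h > 0" unfolding h_def using eps_delta r delta_pos by auto
  note h = h0 h1 h2
  define tl where "tl = \<bar>\<epsilon>\<bar> + h"
  have tl: "tl < \<delta>" "tl > \<bar>\<epsilon>\<bar>" using h eps_delta by (auto simp: tl_def)
  have "psf tl = (tl\<^sup>2 - \<epsilon>\<^sup>2) / 4" using tl rho_one by (simp add: psf_def)
  also have "tl\<^sup>2 - \<epsilon>\<^sup>2 = h * (2 * \<bar>\<epsilon>\<bar> + h)"
    by (simp add: tl_def power2_eq_square algebra_simps)
  also have "\<dots> \<le> (r/\<delta>) * (2 * \<delta>)"
    using h eps_delta by (intro mult_mono) auto
  also have "\<dots> = 2 * r" using delta_pos by simp
  finally have lo: "psf tl \<le> r" using r by simp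
  define th where "th = \<delta> + 4 * r + 1"
  have th1: "(th - \<bar>\<epsilon>\<bar>) * (th + \<bar>\<epsilon>\<bar>) \<ge> (4 * r + 1) * 1"
    using eps_delta r delta_pos by (intro mult_mono) (auto simp: th_def)
  have th2: "(th - \<bar>\<epsilon>\<bar>) * (th + \<bar>\<epsilon>\<bar>) = th\<^sup>2 - \<epsilon>\<^sup>2"
    by (simp add: power2_eq_square algebra_simps)
  have th3: "4 * r + 1 \<le> th\<^sup>2 - \<epsilon>\<^sup>2" using th1 th2 by simp
  moreover have "\<epsilon>\<^sup>2 * (\<rho> th)\<^sup>2 \<le> \<epsilon>\<^sup>2"
    using rho_ge0[of th] rho_le1[of th] by (simp add: mult_left_le power_le_one)
  ultimately have "th\<^sup>2 - \<epsilon>\<^sup>2 * (\<rho> th)\<^sup>2 \<ge> 4 * r + 1" by linarith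
  then have hi: "psf th \<ge> r" unfolding psf_def by simp
  have "tl \<le> th" using tl r by (simp add: th_def)
  then obtain t where t: "tl \<le> t" "t \<le> th" "psf t = r"
    using IVT[of psf tl r th] lo hi psf_cont by blast
  then show ?thesis using tl by (intro bexI[of _ t]) (auto simp: Iset_def)
qed

lemma psf_pos: "t \<in> Iset \<Longrightarrow> psf t > 0"
proof -
  assume t: "t \<in> Iset"
  have "\<bar>\<epsilon> * \<rho> t\<bar> < \<bar>t\<bar>" using eps_rho[of t] t by (simp add: Iset_def)
  then have "\<bar>\<epsilon> * \<rho> t\<bar>\<^sup>2 < \<bar>t\<bar>\<^sup>2" by (intro power_strict_mono) auto
  then have "(\<epsilon> * \<rho> t)\<^sup>2 < t\<^sup>2" by simp
  then show ?thesis by (simp add: psf_def power_mult_distrib)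
qed

lemma psinv: "r > 0 \<Longrightarrow> psinv r \<in> Iset \<and> psf (psinv r) = r"
  using psf_surj unfolding psinv_def by (metis f_inv_into_f inv_into_into image_eqI)

lemma psinv_psf: "t \<in> Iset \<Longrightarrow> psinv (psf t) = t"
  unfolding psinv_def by (rule inv_into_f_f[OF psf_inj])

lemma psinv_cont: "r > 0 \<Longrightarrow> isCont psinv r"
proof -
  assume r: "r > 0"
  define x where "x = psinv r"
  have x: "x \<in> Iset" "psf x = r" using psinv[OF r] by (auto simp: x_def)
  define d where "d = (x - \<bar>\<epsilon>\<bar>) / 2"
  have d: "d > 0" using x by (simp add: d_def Iset_def)
  have "isCont psinv (psf x)"
  proof (rule isCont_inverse_function[where f=psf and g=psinv and x=x, OF d])
    fix z assume "\<bar>z - x\<bar> \<le> d"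
    then have "z \<in> Iset" using x abs_ge_minus_self[of "z - x"] by (auto simp: d_def Iset_def)
    then show "psinv (psf z) = z" by (rule psinv_psf)
  next
    fix z show "isCont psf z" by (rule psf_cont)
  qed
  then show ?thesis using x by simp
qed

lemma psinv_smooth: "smooth_on {0<..} psinv"
  by (rule smooth_inverse_1d[OF open_I _ _ psf1_smooth])
    (use psf_der psf1_pos psinv psinv_cont in auto)

end



context blocks
begin

lemma re_nth_bl: "bounded_linear (\<lambda>z::complex^'n. Re (z $ j))"
  by (rule bounded_linear_compose[OF bounded_linear_Re bounded_linear_vec_nth])
lemma im_nth_bl: "bounded_linear (\<lambda>z::complex^'n. Im (z $ j))"
  by (rule bounded_linear_compose[OF bounded_linear_Im bounded_linear_vec_nth])

lemma sq_smooth: "smooth_on UNIV (\<lambda>z::complex^'n. c * (cmod (z $ j))\<^sup>2)"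
proof -
  have "smooth_on UNIV (\<lambda>z::complex^'n. c * (Re (z $ j) * Re (z $ j) + Im (z $ j) * Im (z $ j)))"
    by (intro smooth_on_mult smooth_on_const smooth_on_add smooth_on_linear re_nth_bl im_nth_bl) simp_all
  moreover have "\<And>x::complex. Re x * Re x + Im x * Im x = (cmod x)\<^sup>2"
    by (subst cmod_power2) (simp add: power2_eq_square)
  ultimately show ?thesis by simp
qed

lemma P_smooth: "smooth_on UNIV P"
  unfolding sqn_plus_def[abs_def] by (intro smooth_on_sum sq_smooth) simp
lemma M_smooth: "smooth_on UNIV M"
  unfolding sqn_minus_def[abs_def] by (intro smooth_on_sum sq_smooth) simp

lemma zp_bl: "bounded_linear zp"
proof -
  have "linear zp" by (rule linearI) (auto simp: vec_eq_iff)
  then show ?thesis using linear_conv_bounded_linear by blast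
qed
lemma zm_bl: "bounded_linear zm"
proof -
  have "linear zm" by (rule linearI) (auto simp: vec_eq_iff)
  then show ?thesis using linear_conv_bounded_linear by blast
qed

lemma P_cont: "continuous_on UNIV P"
  using smooth_on_imp_continuous_on[OF P_smooth] .
lemma M_cont: "continuous_on UNIV M"
  using smooth_on_imp_continuous_on[OF M_smooth] .

lemma psi_comps:
  assumes "P z > 0" "M z > 0"
  shows "psi \<kappa> blk s z = ((M z / P z) powr (1/4)) *\<^sub>R zp z + ((P z / M z) powr (1/4)) *\<^sub>R zm z"
    and "P (psi \<kappa> blk s z) = ((M z / P z) powr (1/4))\<^sup>2 * P z"
    and "M (psi \<kappa> blk s z) = ((P z / M z) powr (1/4))\<^sup>2 * M z"
    and "(((M z / P z) powr (1/4))\<^sup>2 * P z)\<^sup>2 = P z * M z"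
    and "(((P z / M z) powr (1/4))\<^sup>2 * M z)\<^sup>2 = P z * M z"
    and "(M z / P z) powr (1/4) > 0" "(P z / M z) powr (1/4) > 0"
proof -
  obtain a where a_def: "a = (M z / P z) powr (1/4)" by blast
  obtain b where b_def: "b = (P z / M z) powr (1/4)" by blast
  have e: "psi \<kappa> blk s z = a *\<^sub>R zp z + b *\<^sub>R zm z" using assms by (simp add: psi_alt a_def b_def)
  then show "psi \<kappa> blk s z = ((M z / P z) powr (1/4)) *\<^sub>R zp z + ((P z / M z) powr (1/4)) *\<^sub>R zm z"
    by (simp add: a_def b_def)
  show "P (psi \<kappa> blk s z) = ((M z / P z) powr (1/4))\<^sup>2 * P z" "M (psi \<kappa> blk s z) = ((P z / M z) powr (1/4))\<^sup>2 * M z"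
    unfolding e P_comb M_comb a_def b_def by simp_all
  have a4: "a ^ 4 = M z / P z" unfolding a_def using assms by (intro quart) simp
  have b4: "b ^ 4 = P z / M z" unfolding b_def using assms by (intro quart) simp
  have "(a\<^sup>2 * P z)\<^sup>2 = a ^ 4 * (P z)\<^sup>2" by (simp add: power_mult_distrib flip: power_mult)
  also have "\<dots> = P z * M z" using assms by (simp add: a4 power2_eq_square)
  finally show "(((M z / P z) powr (1/4))\<^sup>2 * P z)\<^sup>2 = P z * M z" by (simp add: a_def)
  have "(b\<^sup>2 * M z)\<^sup>2 = b ^ 4 * (M z)\<^sup>2" by (simp add: power_mult_distrib flip: power_mult)
  also have "\<dots> = P z * M z" using assms by (simp add: b4 power2_eq_square)
  finally show "(((P z / M z) powr (1/4))\<^sup>2 * M z)\<^sup>2 = P z * M z" by (simp add: b_def)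
  show "(M z / P z) powr (1/4) > 0" "(P z / M z) powr (1/4) > 0" using assms by simp_all
qed

end

context rhoset
begin

definition "Sset = {z. Ft z = 0} - {z. psi \<kappa> blk s z = 0}"
definition "Tset = {z. Phi \<kappa> blk s z = 0} - {0}"

lemma S_char: "z \<in> Sset \<longleftrightarrow> Ft z = 0 \<and> P z > 0 \<and> M z > 0"
  unfolding Sset_def using psi_zero_iff P_pos_iff M_pos_iff by auto

lemma T_char: "w \<in> Tset \<longleftrightarrow> P w = M w \<and> P w > 0"
proof
  assume w: "w \<in> Tset"
  then have e: "P w = M w" and nz: "w \<noteq> 0" by (auto simp: Tset_def Phi_def)
  have "zp w \<noteq> 0 \<or> zm w \<noteq> 0" using nz zp_zm_sum[of w] by auto
  then have "P w > 0 \<or> M w > 0" using P_pos_iff M_pos_iff by blast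
  then show "P w = M w \<and> P w > 0" using e by auto
next
  assume "P w = M w \<and> P w > 0"
  then show "w \<in> Tset" by (auto simp: Tset_def Phi_def)
qed

lemma S_facts:
  assumes "z \<in> Sset"
  shows "P z + M z \<in> Iset" "\<epsilon> * \<rho> (P z + M z) = M z - P z" "psf (P z + M z) = P z * M z"
proof -
  have z: "Ft z = 0" "P z > 0" "M z > 0" using assms S_char by auto
  show er: "\<epsilon> * \<rho> (P z + M z) = M z - P z" using z(1) by (simp add: Ft_eq)
  show "P z + M z \<in> Iset"
  proof (cases "P z + M z < \<delta>")
    case True
    then have "\<rho> (P z + M z) = 1" using rho_one by simp
    then have "\<epsilon> = M z - P z" using er by simp
    then have "\<bar>\<epsilon>\<bar> < P z + M z" using z by (simp add: abs_less_iff)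
    then show ?thesis by (simp add: Iset_def)
  next
    case False then show ?thesis using eps_delta by (auto simp: Iset_def)
  qed
  have sq: "\<epsilon>\<^sup>2 * (\<rho> (P z + M z))\<^sup>2 = (M z - P z)\<^sup>2" using er by (metis power_mult_distrib)
  have "psf (P z + M z) = ((P z + M z)\<^sup>2 - (M z - P z)\<^sup>2) / 4" unfolding psf_def sq ..
  also have "\<dots> = P z * M z" by (simp add: power2_eq_square algebra_simps)
  finally show "psf (P z + M z) = P z * M z" .
qed

lemma S_PM_det:
  assumes "z \<in> Sset"
  shows "P z = (P z + M z - \<epsilon> * \<rho> (P z + M z)) / 2" "M z = (P z + M z + \<epsilon> * \<rho> (P z + M z)) / 2"
  using S_facts(2)[OF assms] by simp_all

lemma psi_inj: "inj_on (psi \<kappa> blk s) Sset"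
proof (rule inj_onI)
  fix z z' assume z: "z \<in> Sset" and z': "z' \<in> Sset" and eq: "psi \<kappa> blk s z = psi \<kappa> blk s z'"
  have pz: "P z > 0" "M z > 0" using z S_char by auto
  have pz': "P z' > 0" "M z' > 0" using z' S_char by auto
  note c = psi_comps[OF pz] and c' = psi_comps[OF pz']
  have "P z * M z = P z' * M z'"
    using c(2,4) c'(2,4) eq by metis
  then have "psf (P z + M z) = psf (P z' + M z')" using S_facts(3)[OF z] S_facts(3)[OF z'] by simp
  then have t: "P z + M z = P z' + M z'" using psf_inj S_facts(1)[OF z] S_facts(1)[OF z'] inj_onD by metis
  have pe: "P z = P z'" using S_PM_det(1)[OF z] S_PM_det(1)[OF z'] t by metis
  have me: "M z = M z'" using S_PM_det(2)[OF z] S_PM_det(2)[OF z'] t by metis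
  have "zp (psi \<kappa> blk s z) = ((M z / P z) powr (1/4)) *\<^sub>R zp z"
    unfolding c(1) zp_comb ..
  moreover have "zp (psi \<kappa> blk s z') = ((M z / P z) powr (1/4)) *\<^sub>R zp z'"
    unfolding c'(1) zp_comb pe me ..
  ultimately have "zp z = zp z'" using eq c(6) by simp
  have "zm (psi \<kappa> blk s z) = ((P z / M z) powr (1/4)) *\<^sub>R zm z"
    unfolding c(1) zm_comb ..
  moreover have "zm (psi \<kappa> blk s z') = ((P z / M z) powr (1/4)) *\<^sub>R zm z'"
    unfolding c'(1) zm_comb pe me ..
  ultimately have "zm z = zm z'" using eq c(7) by simp
  then show "z = z'" using \<open>zp z = zp z'\<close> zp_zm_sum by metis
qed

lemma psi_into_T: "z \<in> Sset \<Longrightarrow> psi \<kappa> blk s z \<in> Tset"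
proof -
  assume z: "z \<in> Sset"
  have pz: "P z > 0" "M z > 0" using z S_char by auto
  note c = psi_comps[OF pz]
  define a where "a = (M z / P z) powr (1/4)"
  define b where "b = (P z / M z) powr (1/4)"
  have pos: "a\<^sup>2 * P z > 0" "b\<^sup>2 * M z > 0" using c(6,7) pz by (simp_all add: a_def b_def)
  have "(a\<^sup>2 * P z)\<^sup>2 = (b\<^sup>2 * M z)\<^sup>2" using c(4,5) by (simp add: a_def b_def)
  then have "a\<^sup>2 * P z = b\<^sup>2 * M z" using pos by (simp add: power2_eq_iff_nonneg)
  then show ?thesis unfolding T_char c(2,3) using pos by (simp add: a_def b_def)
qed

end



context rhoset
begin

definition "Aa t = t - \<epsilon> * \<rho> t"
definition "Bb t = t + \<epsilon> * \<rho> t"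
definition "c1 t = (Aa t / Bb t) powr (1/4)"
definition "c2 t = (Bb t / Aa t) powr (1/4)"
definition "Gm w = c1 (psinv ((P w)\<^sup>2)) *\<^sub>R zp w + c2 (psinv ((P w)\<^sup>2)) *\<^sub>R zm w"

lemma AB_pos: "t \<in> Iset \<Longrightarrow> Aa t > 0 \<and> Bb t > 0"
  using eps_rho[of t] by (auto simp: Aa_def Bb_def Iset_def abs_le_iff)

lemma AB_prod: "Aa t * Bb t = 4 * psf t"
  by (simp add: Aa_def Bb_def psf_def power2_eq_square algebra_simps)

lemma G_props:
  assumes w: "w \<in> Tset"
  shows "Gm w \<in> Sset" "psi \<kappa> blk s (Gm w) = w"
proof -
  have q: "P w = M w" "P w > 0" using w T_char by auto
  define q where "q = P w"
  define t where "t = psinv (q\<^sup>2)"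
  have t: "t \<in> Iset" "psf t = q\<^sup>2" using psinv[of "q\<^sup>2"] q by (auto simp: t_def q_def)
  have AB: "Aa t > 0" "Bb t > 0" using AB_pos[OF t(1)] by auto
  have c1p: "c1 t > 0" and c2p: "c2 t > 0" using AB by (auto simp: c1_def c2_def)
  have c14: "(c1 t)^4 = Aa t / Bb t" unfolding c1_def using AB by (intro quart) simp
  have c24: "(c2 t)^4 = Bb t / Aa t" unfolding c2_def using AB by (intro quart) simp
  have G: "Gm w = c1 t *\<^sub>R zp w + c2 t *\<^sub>R zm w" by (simp add: Gm_def t_def q_def)
  have PG: "P (Gm w) = (c1 t)\<^sup>2 * q" unfolding G P_comb q_def ..
  have MG: "M (Gm w) = (c2 t)\<^sup>2 * q" unfolding G M_comb q_def q(1) ..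
  have q2: "q\<^sup>2 = Aa t * Bb t / 4" using AB_prod[of t] t(2) by simp
  have "(P (Gm w))\<^sup>2 = (c1 t)^4 * q\<^sup>2" unfolding PG by (simp add: power_mult_distrib flip: power_mult)
  also have "\<dots> = (Aa t / 2)\<^sup>2" using AB unfolding c14 q2 by (simp add: power2_eq_square field_simps)
  finally have PA: "P (Gm w) = Aa t / 2" using AB PG q(2) by (simp add: q_def power2_eq_iff_nonneg)
  have "(M (Gm w))\<^sup>2 = (c2 t)^4 * q\<^sup>2" unfolding MG by (simp add: power_mult_distrib flip: power_mult)
  also have "\<dots> = (Bb t / 2)\<^sup>2" using AB unfolding c24 q2 by (simp add: power2_eq_square field_simps)
  finally have MB: "M (Gm w) = Bb t / 2" using AB MG q(2) by (simp add: q_def power2_eq_iff_nonneg)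
  have sum: "P (Gm w) + M (Gm w) = t" unfolding PA MB Aa_def Bb_def by (simp add: field_simps)
  have "Ft (Gm w) = 0" unfolding Ft_eq sum unfolding PA MB by (simp add: Aa_def Bb_def field_simps)
  then show GS: "Gm w \<in> Sset" unfolding S_char PA MB using AB by simp
  have "psi \<kappa> blk s (Gm w) = (c2 t * c1 t) *\<^sub>R zp w + (c1 t * c2 t) *\<^sub>R zm w"
  proof -
    have pos: "P (Gm w) > 0" "M (Gm w) > 0" unfolding PA MB using AB by auto
    have r: "M (Gm w) / P (Gm w) = Bb t / Aa t" "P (Gm w) / M (Gm w) = Aa t / Bb t" unfolding PA MB by simp_all
    have r2: "(Bb t / Aa t) powr (1/4) = c2 t" "(Aa t / Bb t) powr (1/4) = c1 t" by (simp_all add: c1_def c2_def)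
    show ?thesis unfolding psi_comps(1)[OF pos] r r2 unfolding G zp_comb zm_comb
      by simp
  qed
  also have e1: "c2 t * c1 t = 1"
  proof -
    have "c2 t * c1 t = (Bb t / Aa t * (Aa t / Bb t)) powr (1/4)" by (simp only: c1_def c2_def powr_mult)
    also have "\<dots> = 1" using AB by simp
    finally show ?thesis .
  qed
  finally have "psi \<kappa> blk s (Gm w) = zp w + (c1 t * c2 t) *\<^sub>R zm w" by simp
  also have "c1 t * c2 t = 1" using e1 by (simp add: mult.commute)
  finally show "psi \<kappa> blk s (Gm w) = w" using zp_zm_sum[of w] by simp
qed

lemma psi_image: "psi \<kappa> blk s ` Sset = Tset"
proof
  show "psi \<kappa> blk s ` Sset \<subseteq> Tset" using psi_into_T by blast
  show "Tset \<subseteq> psi \<kappa> blk s ` Sset"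
  proof
    fix w assume "w \<in> Tset"
    then have "Gm w \<in> Sset" "w = psi \<kappa> blk s (Gm w)" using G_props by auto
    then show "w \<in> psi \<kappa> blk s ` Sset" by (rule rev_image_eqI)
  qed
qed

lemma inv_eq: "w \<in> Tset \<Longrightarrow> inv_into Sset (psi \<kappa> blk s) w = Gm w"
  by (rule inv_into_f_eq[OF psi_inj G_props])

lemma psi_smooth: "smooth_map_on Sset (psi \<kappa> blk s)"
  unfolding smooth_map_on_def
proof
  fix x assume x: "x \<in> Sset"
  define U where "U = {z. 0 < P z} \<inter> {z. 0 < M z}"
  have U: "open U" unfolding U_def
    by (rule open_Int[OF open_Collect_less[OF continuous_on_const P_cont] open_Collect_less[OF continuous_on_const M_cont]])
  have PU: "smooth_on U P" by (rule smooth_on_subset[OF P_smooth U]) simp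
  have MU: "smooth_on U M" by (rule smooth_on_subset[OF M_smooth U]) simp
  have pos: "\<And>z. z \<in> U \<Longrightarrow> P z > 0" "\<And>z. z \<in> U \<Longrightarrow> M z > 0" by (auto simp: U_def)
  define g where "g z = (M z powr (1/4) * P z powr (-(1/4))) *\<^sub>R zp z + (P z powr (1/4) * M z powr (-(1/4))) *\<^sub>R zm z" for z
  have s1: "smooth_on U (\<lambda>z. M z powr (1/4) * P z powr (-(1/4)))"
    by (rule smooth_on_mult[OF smooth_powr_compose[OF MU pos(2)] smooth_powr_compose[OF PU pos(1)]])
  have s2: "smooth_on U (\<lambda>z. P z powr (1/4) * M z powr (-(1/4)))"
    by (rule smooth_on_mult[OF smooth_powr_compose[OF PU pos(1)] smooth_powr_compose[OF MU pos(2)]])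
  have "smooth_on U g" unfolding g_def
    by (rule smooth_on_add[OF smooth_on_scaleR[OF s1 smooth_on_linear[OF U zp_bl]] smooth_on_scaleR[OF s2 smooth_on_linear[OF U zm_bl]]])
  moreover have "g z = psi \<kappa> blk s z" if "z \<in> U" for z
  proof -
    have e1: "(M z / P z) powr (1/4) = M z powr (1/4) * P z powr (-(1/4))"
      unfolding powr_divide powr_minus_divide by simp
    have e2: "(P z / M z) powr (1/4) = P z powr (1/4) * M z powr (-(1/4))"
      unfolding powr_divide powr_minus_divide by simp
    show ?thesis unfolding psi_comps(1)[OF pos[OF that]] e1 e2 g_def ..
  qed
  moreover have "x \<in> U" using x S_char by (auto simp: U_def)
  ultimately show "\<exists>U g. x \<in> U \<and> smooth_on U g \<and> (\<forall>y\<in>Sset \<inter> U. g y = psi \<kappa> blk s y)"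
    by (intro exI[of _ U] exI[of _ g]) simp
qed

lemma c_smooth: "smooth_on Iset c1" "smooth_on Iset c2"
proof -
  have r: "smooth_on Iset \<rho>" by (rule smooth_on_subset[OF rho_smooth open_I]) simp
  have id: "smooth_on Iset (\<lambda>t. t)" by (rule smooth_on_linear[OF open_I]) simp
  have A: "smooth_on Iset Aa" unfolding Aa_def[abs_def]
    using smooth_on_diff[OF id smooth_on_cmult[OF r, of \<epsilon>]] by simp
  have B: "smooth_on Iset Bb" unfolding Bb_def[abs_def]
    using smooth_on_add[OF id smooth_on_cmult[OF r, of \<epsilon>]] by simp
  have Ap: "\<And>t. t \<in> Iset \<Longrightarrow> Aa t > 0" and Bp: "\<And>t. t \<in> Iset \<Longrightarrow> Bb t > 0" using AB_pos by auto
  have p1: "Aa t * Bb t powr (-1) > 0" if "t \<in> Iset" for t using Ap[OF that] Bp[OF that] by simp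
  have p2: "Bb t * Aa t powr (-1) > 0" if "t \<in> Iset" for t using Ap[OF that] Bp[OF that] by simp
  have "smooth_on Iset (\<lambda>t. (Aa t * Bb t powr (-1)) powr (1/4))"
    by (rule smooth_powr_compose[OF smooth_on_mult[OF A smooth_powr_compose[OF B Bp]] p1])
  then show "smooth_on Iset c1"
    by (rule smooth_on_cong) (use Bp in \<open>simp add: c1_def powr_minus_divide abs_of_pos\<close>)
  have "smooth_on Iset (\<lambda>t. (Bb t * Aa t powr (-1)) powr (1/4))"
    by (rule smooth_powr_compose[OF smooth_on_mult[OF B smooth_powr_compose[OF A Ap]] p2])
  then show "smooth_on Iset c2"
    by (rule smooth_on_cong) (use Ap in \<open>simp add: c2_def powr_minus_divide abs_of_pos\<close>)
qed

lemma inv_smooth: "smooth_map_on Tset (inv_into Sset (psi \<kappa> blk s))"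
  unfolding smooth_map_on_def
proof
  fix x assume x: "x \<in> Tset"
  define U where "U = {z. 0 < P z}"
  have U: "open U" unfolding U_def
    by (rule open_Collect_less[OF continuous_on_const P_cont])
  have PU: "smooth_on U P" by (rule smooth_on_subset[OF P_smooth U]) simp
  have pos: "\<And>z. z \<in> U \<Longrightarrow> P z > 0" by (auto simp: U_def)
  have sq: "smooth_on U (\<lambda>w. (P w)\<^sup>2)" using smooth_on_mult[OF PU PU] by (simp add: power2_eq_square)
  have sqpos: "(\<lambda>w. (P w)\<^sup>2) ` U \<subseteq> {0<..}"
  proof
    fix y assume "y \<in> (\<lambda>w. (P w)\<^sup>2) ` U"
    then obtain w where "w \<in> U" "y = (P w)\<^sup>2" by blast
    then show "y \<in> {0<..}" using pos[of w] by simp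
  qed
  have psinv_I: "psinv ` {0<..} \<subseteq> Iset" using psinv by auto
  have k1: "smooth_on {0<..} (\<lambda>r. c1 (psinv r))"
    by (rule smooth_on_compose[OF psinv_smooth c_smooth(1) psinv_I])
  have k2: "smooth_on {0<..} (\<lambda>r. c2 (psinv r))"
    by (rule smooth_on_compose[OF psinv_smooth c_smooth(2) psinv_I])
  have "smooth_on U Gm" unfolding Gm_def[abs_def]
    by (intro smooth_on_add smooth_on_scaleR smooth_on_compose[OF sq k1 sqpos]
        smooth_on_compose[OF sq k2 sqpos] smooth_on_linear[OF U zp_bl] smooth_on_linear[OF U zm_bl])
  moreover have "x \<in> U" using x T_char by (auto simp: U_def)
  moreover have "\<forall>y\<in>Tset \<inter> U. Gm y = inv_into Sset (psi \<kappa> blk s) y" using inv_eq by auto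
  ultimately show "\<exists>U g. x \<in> U \<and> smooth_on U g \<and> (\<forall>y\<in>Tset \<inter> U. g y = inv_into Sset (psi \<kappa> blk s) y)"
    by (intro exI[of _ U] exI[of _ Gm]) simp
qed

lemma diffeo: "diffeomorphism_onto (psi \<kappa> blk s) Sset Tset"
  unfolding diffeomorphism_onto_def by (intro conjI psi_inj psi_image psi_smooth inv_smooth)

end


theorem mainTheorem5:
  fixes \<kappa> :: "nat \<Rightarrow> int" and blk :: "'n::finite \<Rightarrow> nat" and k s :: nat
    and \<delta> \<epsilon> C :: real and \<rho> :: "real \<Rightarrow> real"
  assumes blk_range: "\<forall>j. blk j \<in> {1..k}"
    and s_le: "s \<le> k"
    and kappa_pos: "\<forall>i\<in>{1..s}. \<kappa> i > 0"
    and kappa_neg: "\<forall>i\<in>{s<..k}. \<kappa> i < 0"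
    and kappa_distinct: "inj_on \<kappa> {1..k}"
    and delta_pos: "\<delta> > 0"
    and rho_smooth: "smooth_on UNIV \<rho>"
    and rho_one: "\<forall>t. t < \<delta> \<longrightarrow> \<rho> t = 1"
    and rho_zero: "\<forall>t. t > 2 * \<delta> \<longrightarrow> \<rho> t = 0"
    and rho_decr: "\<forall>t. deriv \<rho> t \<le> 0"
    and C_def: "C = (SUP t. \<bar>deriv \<rho> t\<bar>)"
    and eps_nz: "\<epsilon> \<noteq> 0"
    and eps_C: "\<bar>\<epsilon>\<bar> < inverse C"
    and eps_delta: "\<bar>\<epsilon>\<bar> < \<delta>"
  shows
    "(\<forall>A lam z. A \<in> G_set blk \<longrightarrow> cmod lam = 1 \<longrightarrow>
        Phi_tilde \<kappa> blk s \<epsilon> \<rho> (GS1_act \<kappa> blk A lam z) = Phi_tilde \<kappa> blk s \<epsilon> \<rho> z)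
   \<and> (\<forall>z. critical_point (Phi_tilde \<kappa> blk s \<epsilon> \<rho>) z \<longleftrightarrow> z = 0)
   \<and> nondegenerate_critical_point (Phi_tilde \<kappa> blk s \<epsilon> \<rho>) 0
   \<and> regular_value (Phi_tilde \<kappa> blk s \<epsilon> \<rho>) 0
   \<and> {z. Phi_tilde \<kappa> blk s \<epsilon> \<rho> z = 0 \<and> sqn_plus \<kappa> blk s z + sqn_minus \<kappa> blk s z > 2 * \<delta>}
       = {z. Phi \<kappa> blk s z = 0 \<and> sqn_plus \<kappa> blk s z + sqn_minus \<kappa> blk s z > 2 * \<delta>}
   \<and> {z. Phi_tilde \<kappa> blk s \<epsilon> \<rho> z = 0 \<and> sqn_plus \<kappa> blk s z + sqn_minus \<kappa> blk s z < \<delta>}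
       = {z. Phi \<kappa> blk s z = - \<epsilon> \<and> sqn_plus \<kappa> blk s z + sqn_minus \<kappa> blk s z < \<delta>}
   \<and> (\<forall>z\<in>{z. Phi_tilde \<kappa> blk s \<epsilon> \<rho> z = 0} - {z. psi \<kappa> blk s z = 0}.
        \<forall>A lam. A \<in> G_set blk \<longrightarrow> cmod lam = 1 \<longrightarrow>
          psi \<kappa> blk s (GS1_act \<kappa> blk A lam z) = GS1_act \<kappa> blk A lam (psi \<kappa> blk s z))
   \<and> diffeomorphism_onto (psi \<kappa> blk s)
       ({z. Phi_tilde \<kappa> blk s \<epsilon> \<rho> z = 0} - {z. psi \<kappa> blk s z = 0})
       ({z. Phi \<kappa> blk s z = 0} - {0})"
proof -
  interpret R: rhoset \<kappa> blk k s \<delta> \<epsilon> C \<rho>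
    by unfold_locales (use assms in auto)
  have c1: "\<forall>A lam z. A \<in> G_set blk \<longrightarrow> cmod lam = 1 \<longrightarrow>
        Phi_tilde \<kappa> blk s \<epsilon> \<rho> (GS1_act \<kappa> blk A lam z) = Phi_tilde \<kappa> blk s \<epsilon> \<rho> z"
    by (simp add: R.Ft_eq R.P_GS R.M_GS)
  have c7: "\<forall>z\<in>{z. Phi_tilde \<kappa> blk s \<epsilon> \<rho> z = 0} - {z. psi \<kappa> blk s z = 0}.
        \<forall>A lam. A \<in> G_set blk \<longrightarrow> cmod lam = 1 \<longrightarrow>
          psi \<kappa> blk s (GS1_act \<kappa> blk A lam z) = GS1_act \<kappa> blk A lam (psi \<kappa> blk s z)"
    using R.psi_GS by blast
  have c8: "diffeomorphism_onto (psi \<kappa> blk s)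
       ({z. Phi_tilde \<kappa> blk s \<epsilon> \<rho> z = 0} - {z. psi \<kappa> blk s z = 0})
       ({z. Phi \<kappa> blk s z = 0} - {0})"
    using R.diffeo unfolding R.Sset_def R.Tset_def .
  show ?thesis
    by (intro conjI c1 c7 c8 allI R.crit_iff R.nondeg R.regular R.level_big R.level_small)
qed

end
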